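(* Let $\Omega\subset\mathbb{R}^d$ be a bounded domain, $\gamma>0$, $G:\mathbb{R}^2\to\mathbb{R}$ smooth with $\|G\|_\infty+\|\nabla G\|_\infty\le1$, and $I\in\mathcal{C}_b(\Omega)$ with $I(x)>0$ for almost every $x\in\Omega$. Let $n_0\in\mathcal{C}_b(\Omega,L^1_s)$, $n_0\ge0$, $w_0\in\mathcal{C}_b(\Omega\times\Omega)$, $w_0\ge0$, with $g(x)=\int_0^\infty n_0(s,x)ds$ satisfying $\int_\Omega g=1$. Assume $p\in W^{1,\infty}((0,\infty)\times\mathbb{R})$ satisfies $p_*\mathbb{1}_{\{s>s_*\}}\le p(s,S)\le p_\infty$ for all $s,S$, for constants $p_*,p_\infty,s_*>0$, and that $p(s,\infty):=\lim_{S\to\infty}p(s,S)$ exists for all $s\ge0$. For $k>0$ let $n^k$ be a solution of $$\begin{cases}\partial_t n+\partial_s n+p(s,S(t,x))n=0,\\ N(t,x)=n(t,0,x)=\int_0^\infty p(s,S(t,x))n\,ds,\\ S(t,x)=\int_\Omega w(t,x,y)N(t,y)\,dy+kI(x),\\ \partial_t w=-w+\gamma G(N(t,x),N(t,y)),\\ n(0)=n_0,\ w(0)=w_0,\end{cases}$$ and let $n^\infty$ be the solution of the linear problem $$\begin{cases}\partial_t n+\partial_s n+p(s,\infty)n=0,& t>0,s>0,x\in\Omega,\\ N(t,x)=n(t,0,x)=\int_0^\infty p(s,\infty)n\,ds,\\ n(0,s,x)=n_0(s,x).\end{cases}$$ Then for all $t>0$, $n^k(t)\to n^\infty(t)$ in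 $L^1_{s,x}$ as $k\to\infty$.
   Context: $L^1_s=L^1((0,\infty))$ in $s$, $L^1_{s,x}=L^1((0,\infty)\times\Omega)$; $\mathcal{C}_b$ denotes bounded continuous functions. Solutions are understood in the weak (characteristics/Duhamel) sense. *)

theory Defs
  imports "HOL-Analysis.Analysis"
begin

definition bounded_domain :: "'d::euclidean_space set \<Rightarrow> bool" where
  "bounded_domain \<Omega> \<longleftrightarrow> \<Omega> \<noteq> {} \<and> open \<Omega> \<and> connected \<Omega> \<and> bounded \<Omega>"

definition smooth2 :: "(real \<Rightarrow> real \<Rightarrow> real) \<Rightarrow> (nat \<Rightarrow> nat \<Rightarrow> real \<Rightarrow> real \<Rightarrow> real) \<Rightarrow> bool" where
  "smooth2 G D \<longleftrightarrow> D 0 0 = G \<and>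
     (\<forall>i j x y. ((\<lambda>u. D i j u y) has_real_derivative D (Suc i) j x y) (at x)) \<and>
     (\<forall>i j x y. ((\<lambda>v. D i j x v) has_real_derivative D i (Suc j) x y) (at y)) \<and>
     (\<forall>i j. continuous_on UNIV (\<lambda>z. D i j (fst z) (snd z)))"

definition Cb_L1 :: "'d::euclidean_space set \<Rightarrow> (real \<Rightarrow> 'd \<Rightarrow> real) \<Rightarrow> bool" where
  "Cb_L1 \<Omega> f \<longleftrightarrow>
     (\<forall>x\<in>\<Omega>. set_integrable lborel {0<..} (\<lambda>s. f s x)) \<and>
     (\<forall>x\<in>\<Omega>. \<forall>e>0. \<exists>\<delta>>0. \<forall>y\<in>\<Omega>. dist y x < \<delta> \<longrightarrow>
          (LINT s:{0<..}|lborel. \<bar>f s y - f s x\<bar>) < e) \<and>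
     (\<exists>B. \<forall>x\<in>\<Omega>. (LINT s:{0<..}|lborel. \<bar>f s x\<bar>) \<le> B)"

text \<open>Weak (characteristics) solution of the age-structured equation
   d_t n + d_s n + a(t,s,x) n = 0,  N(t,x) = n(t,0,x) = int_0^inf a(t,s,x) n ds,  n(0)=n0,
  with N continuous on [0,inf) x Omega and bounded on [0,T] x Omega for every T, and
  n(t) in L^1((0,inf) x Omega) for each t.\<close>
definition renewal_char ::
  "(real \<Rightarrow> real \<Rightarrow> 'd::euclidean_space \<Rightarrow> real) \<Rightarrow> (real \<Rightarrow> 'd \<Rightarrow> real) \<Rightarrow> 'd set
    \<Rightarrow> (real \<Rightarrow> real \<Rightarrow> 'd \<Rightarrow> real) \<Rightarrow> (real \<Rightarrow> 'd \<Rightarrow> real) \<Rightarrow> bool" where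
  "renewal_char a n0 \<Omega> n N \<longleftrightarrow>
     (\<forall>t\<ge>0. \<forall>x\<in>\<Omega>.
        (AE s in lborel. s > 0 \<longrightarrow>
           n t s x = (if t < s
                      then n0 (s - t) x * exp (- integral {0..t} (\<lambda>\<tau>. a \<tau> (s - t + \<tau>) x))
                      else N (t - s) x * exp (- integral {0..s} (\<lambda>\<sigma>. a (t - s + \<sigma>) \<sigma> x)))) \<and>
        set_integrable lborel {0<..} (\<lambda>s. n t s x) \<and>
        N t x = (LINT s:{0<..}|lborel. a t s x * n t s x)) \<and>
     (\<forall>t\<ge>0. integrable (lebesgue_on ({0<..} \<times> \<Omega>)) (\<lambda>z. n t (fst z) (snd z))) \<and>
     continuous_on ({0..} \<times> \<Omega>) (\<lambda>z. N (fst z) (snd z)) \<and>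
     (\<forall>T. bounded ((\<lambda>z. N (fst z) (snd z)) ` ({0..T} \<times> \<Omega>)))"

text \<open>Solution of the nonlinear system with parameter k (w via Duhamel's formula).\<close>
definition nonlinear_solution ::
  "(real \<Rightarrow> real \<Rightarrow> real) \<Rightarrow> (real \<Rightarrow> real \<Rightarrow> real) \<Rightarrow> real \<Rightarrow> ('d::euclidean_space \<Rightarrow> real)
    \<Rightarrow> real \<Rightarrow> 'd set \<Rightarrow> (real \<Rightarrow> 'd \<Rightarrow> real) \<Rightarrow> ('d \<Rightarrow> 'd \<Rightarrow> real)
    \<Rightarrow> (real \<Rightarrow> real \<Rightarrow> 'd \<Rightarrow> real) \<Rightarrow> bool" where
  "nonlinear_solution p G \<gamma> I k \<Omega> n0 w0 n \<longleftrightarrow>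
     (\<exists>N w S.
        renewal_char (\<lambda>t s x. p s (S t x)) n0 \<Omega> n N \<and>
        continuous_on ({0..} \<times> \<Omega> \<times> \<Omega>) (\<lambda>z. w (fst z) (fst (snd z)) (snd (snd z))) \<and>
        (\<forall>T. bounded ((\<lambda>z. w (fst z) (fst (snd z)) (snd (snd z))) ` ({0..T} \<times> \<Omega> \<times> \<Omega>))) \<and>
        (\<forall>t\<ge>0. \<forall>x\<in>\<Omega>. S t x = (LINT y:\<Omega>|lebesgue. w t x y * N t y) + k * I x) \<and>
        (\<forall>t\<ge>0. \<forall>x\<in>\<Omega>. \<forall>y\<in>\<Omega>.
           w t x y = exp (- t) * w0 x y
                     + \<gamma> * integral {0..t} (\<lambda>\<tau>. exp (- (t - \<tau>)) * G (N \<tau> x) (N \<tau> y))))"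

definition linear_solution ::
  "(real \<Rightarrow> real) \<Rightarrow> 'd::euclidean_space set \<Rightarrow> (real \<Rightarrow> 'd \<Rightarrow> real)
    \<Rightarrow> (real \<Rightarrow> real \<Rightarrow> 'd \<Rightarrow> real) \<Rightarrow> bool" where
  "linear_solution pinf \<Omega> n0 n \<longleftrightarrow> (\<exists>N. renewal_char (\<lambda>t s x. pinf s) n0 \<Omega> n N)"

end

theory Submission
  imports Defs
begin

lemma gronwall_const:
  fixes F :: "real \<Rightarrow> real"
  assumes cont: "continuous_on {0..T} F" and c: "c \<ge> 0"
    and le: "\<And>\<tau>. \<tau> \<in> {0..T} \<Longrightarrow> F \<tau> \<le> A + c * integral {0..\<tau>} F"
    and tau: "\<tau> \<in> {0..T}"
  shows "F \<tau> \<le> A * exp (c * \<tau>)"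
proof -
  define H where "H = (\<lambda>u. exp (- c * u) * (A + c * integral {0..u} F))"
  have contH: "continuous_on {0..\<tau>} H"
    unfolding H_def using tau
    by (intro continuous_intros indefinite_integral_continuous_1 integrable_continuous_real continuous_on_subset[OF cont]) auto
  have "H \<tau> \<le> H 0"
  proof (rule DERIV_nonpos_imp_decreasing_open[of 0 \<tau> H])
    show "0 \<le> \<tau>" using tau by auto
    show "continuous_on {0..\<tau>} H" by fact
    fix x assume x: "0 < x" "x < \<tau>"
    have cF: "continuous_on {0..\<tau>} F" using tau by (intro continuous_on_subset[OF cont]) auto
    have d1: "((\<lambda>u. integral {0..u} F) has_real_derivative F x) (at x within {0..\<tau>})"
      using x by (intro integral_has_real_derivative cF) auto
    have d2: "((\<lambda>u. integral {0..u} F) has_real_derivative F x) (at x)"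
      using d1 x by (simp add: at_within_Icc_at)
    have "(H has_real_derivative (- c * exp (- c * x) * (A + c * integral {0..x} F) + exp (- c * x) * (c * F x))) (at x)"
      unfolding H_def
      by (auto intro!: derivative_eq_intros d2)
    moreover have "- c * exp (- c * x) * (A + c * integral {0..x} F) + exp (- c * x) * (c * F x)
        = c * exp (- c * x) * (F x - (A + c * integral {0..x} F))"
      by (simp add: algebra_simps)
    moreover have "c * exp (- c * x) * (F x - (A + c * integral {0..x} F)) \<le> 0"
      using le[of x] x tau c by (intro mult_nonneg_nonpos) auto
    ultimately show "\<exists>y. (H has_real_derivative y) (at x) \<and> y \<le> 0" by metis
  qed
  hence "exp (- c * \<tau>) * (A + c * integral {0..\<tau>} F) \<le> A" by (simp add: H_def)
  hence "A + c * integral {0..\<tau>} F \<le> A * exp (c * \<tau>)"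
    by (simp add: exp_minus field_simps)
  with le[OF tau] show ?thesis by linarith
qed

lemma exp_neg_integral_le1:
  fixes f :: "real \<Rightarrow> real"
  assumes "\<And>x. x \<in> S \<Longrightarrow> 0 \<le> f x"
  shows "exp (- integral S f) \<le> 1"
proof (cases "f integrable_on S")
  case True
  then have "0 \<le> integral S f" using assms by (rule integral_nonneg)
  then show ?thesis by simp
next
  case False then show ?thesis by (simp add: not_integrable_integral)
qed

lemma sli_real: "(LINT s:A|M. f s) = integral\<^sup>L M (\<lambda>s. indicator A s * (f s :: real))"
  by (simp add: set_lebesgue_integral_def)

lemma si_real: "set_integrable M A (f :: _ \<Rightarrow> real) \<longleftrightarrow> integrable M (\<lambda>s. indicator A s * f s)"
  by (simp add: set_integrable_def)

lemma shift_integrable: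
  fixes m0 :: "real \<Rightarrow> real"
  assumes "integrable lborel (\<lambda>s. indicator {0<..} s * m0 s)"
  shows "integrable lborel (\<lambda>s. indicator {\<tau><..} s * m0 (s - \<tau>))"
proof -
  have "integrable lborel (\<lambda>x. (\<lambda>s. indicator {0<..} s * m0 s) (- \<tau> + 1 * x))"
    by (rule lborel_integrable_real_affine[OF assms]) simp
  moreover have "(\<lambda>x. (\<lambda>s. indicator {0<..} s * m0 s) (- \<tau> + 1 * x)) = (\<lambda>s. indicator {\<tau><..} s * m0 (s - \<tau>))"
    by (auto simp: indicator_def fun_eq_iff)
  ultimately show ?thesis by simp
qed

lemma shift_integral:
  fixes m0 :: "real \<Rightarrow> real"
  shows "integral\<^sup>L lborel (\<lambda>s. indicator {\<tau><..} s * m0 (s - \<tau>)) = integral\<^sup>L lborel (\<lambda>s. indicator {0<..} s * m0 s)"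
proof -
  have "integral\<^sup>L lborel (\<lambda>s. indicator {\<tau><..} s * m0 (s - \<tau>)) =
     \<bar>1\<bar> *\<^sub>R integral\<^sup>L lborel (\<lambda>x. (\<lambda>s. indicator {\<tau><..} s * m0 (s - \<tau>)) (\<tau> + 1 * x))"
    by (rule lborel_integral_real_affine) simp
  moreover have "(\<lambda>x. (\<lambda>s. indicator {\<tau><..} s * m0 (s - \<tau>)) (\<tau> + 1 * x)) = (\<lambda>s. indicator {0<..} s * m0 s)"
    by (auto simp: indicator_def fun_eq_iff)
  ultimately show ?thesis by simp
qed

lemma reflect_integral:
  fixes N :: "real \<Rightarrow> real"
  assumes "continuous_on {0..\<tau>} N"
  shows "integrable lborel (\<lambda>s. indicator {0..\<tau>} s * N (\<tau> - s))"
    and "integral\<^sup>L lborel (\<lambda>s. indicator {0..\<tau>} s * N (\<tau> - s)) = integral {0..\<tau>} N"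
proof -
  have c2: "continuous_on {0..\<tau>} (\<lambda>s. N (\<tau> - s))"
    by (intro continuous_on_compose2[OF assms] continuous_intros) auto
  show "integrable lborel (\<lambda>s. indicator {0..\<tau>} s * N (\<tau> - s))"
    using borel_integrable_compact[OF _ c2] by simp
  have i1: "integrable lborel (\<lambda>s. indicator {0..\<tau>} s * N s)"
    using borel_integrable_compact[OF _ assms] by simp
  have "integral\<^sup>L lborel (\<lambda>s. indicator {0..\<tau>} s * N s) =
     \<bar>-1\<bar> *\<^sub>R integral\<^sup>L lborel (\<lambda>x. (\<lambda>s. indicator {0..\<tau>} s * N s) (\<tau> + (-1) * x))"
    by (rule lborel_integral_real_affine) simp
  moreover have "(\<lambda>x. (\<lambda>s. indicator {0..\<tau>} s * N s) (\<tau> + (-1) * x)) = (\<lambda>s. indicator {0..\<tau>} s * N (\<tau> - s))"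
    by (auto simp: indicator_def fun_eq_iff)
  moreover have "integral\<^sup>L lborel (\<lambda>s. indicator {0..\<tau>} s * N s) = integral {0..\<tau>} N"
    using set_borel_integral_eq_integral(2)[of "{0..\<tau>}" N] i1
    by (simp add: set_integrable_def set_lebesgue_integral_def)
  ultimately show "integral\<^sup>L lborel (\<lambda>s. indicator {0..\<tau>} s * N (\<tau> - s)) = integral {0..\<tau>} N"
    by simp
qed

locale renewal_data =
  fixes a :: "real \<Rightarrow> real \<Rightarrow> real" and n :: "real \<Rightarrow> real \<Rightarrow> real"
    and N m0 :: "real \<Rightarrow> real" and P B :: real
  assumes a_bd: "\<And>\<tau> s. 0 \<le> \<tau> \<Longrightarrow> 0 \<le> s \<Longrightarrow> 0 \<le> a \<tau> s \<and> a \<tau> s \<le> P"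
  and nform: "\<And>\<tau>. 0 \<le> \<tau> \<Longrightarrow> AE s in lborel. s > 0 \<longrightarrow> n \<tau> s =
       (if \<tau> < s then m0 (s - \<tau>) * exp (- integral {0..\<tau>} (\<lambda>\<sigma>. a \<sigma> (s - \<tau> + \<sigma>)))
        else N (\<tau> - s) * exp (- integral {0..s} (\<lambda>\<sigma>. a (\<tau> - s + \<sigma>) \<sigma>)))"
  and nint: "\<And>\<tau>. 0 \<le> \<tau> \<Longrightarrow> set_integrable lborel {0<..} (n \<tau>)"
  and Neq: "\<And>\<tau>. 0 \<le> \<tau> \<Longrightarrow> N \<tau> = (LINT s:{0<..}|lborel. a \<tau> s * n \<tau> s)"
  and m0int: "set_integrable lborel {0<..} m0"
  and Bm: "(LINT s:{0<..}|lborel. \<bar>m0 s\<bar>) \<le> B"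
  and Ncont: "continuous_on {0..} N"
begin

lemma P_nonneg: "0 \<le> P" using a_bd[of 0 0] by auto

lemma n_pointwise:
  assumes tau: "0 \<le> \<tau>"
  shows "AE s in lborel. indicator {0<..} s * \<bar>n \<tau> s\<bar> \<le>
     indicator {\<tau><..} s * \<bar>m0 (s - \<tau>)\<bar> + indicator {0..\<tau>} s * \<bar>N (\<tau> - s)\<bar>"
  using nform[OF tau]
proof eventually_elim
  case (elim s)
  show ?case
  proof (cases "s > 0")
    case False then show ?thesis by (auto simp: indicator_def)
  next
    case True
    show ?thesis
    proof (cases "\<tau> < s")
      case True
      have "exp (- integral {0..\<tau>} (\<lambda>\<sigma>. a \<sigma> (s - \<tau> + \<sigma>))) \<le> 1"
        using True by (intro exp_neg_integral_le1) (auto intro!: conjunct1[OF a_bd])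
      then have "\<bar>n \<tau> s\<bar> \<le> \<bar>m0 (s - \<tau>)\<bar>" using elim \<open>s > 0\<close> True
        by (simp add: abs_mult mult_left_le)
      then show ?thesis using True \<open>s>0\<close> by (simp add: indicator_def)
    next
      case False
      have "exp (- integral {0..s} (\<lambda>\<sigma>. a (\<tau> - s + \<sigma>) \<sigma>)) \<le> 1"
        using False by (intro exp_neg_integral_le1) (auto intro!: conjunct1[OF a_bd])
      then have "\<bar>n \<tau> s\<bar> \<le> \<bar>N (\<tau> - s)\<bar>" using elim \<open>s > 0\<close> False
        by (simp add: abs_mult mult_left_le)
      then show ?thesis using False \<open>s>0\<close> by (simp add: indicator_def)
    qed
  qed
qed

lemma n_L1:
  assumes tau: "0 \<le> \<tau>"
  shows "(LINT s:{0<..}|lborel. \<bar>n \<tau> s\<bar>) \<le> B + integral {0..\<tau>} (\<lambda>u. \<bar>N u\<bar>)"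
proof -
  have cN: "continuous_on {0..\<tau>} (\<lambda>u. \<bar>N u\<bar>)"
    by (intro continuous_intros continuous_on_subset[OF Ncont]) auto
  have m0a: "integrable lborel (\<lambda>s. indicator {0<..} s * \<bar>m0 s\<bar>)"
    using integrable_abs[OF m0int[unfolded si_real]] by (simp add: abs_mult)
  have i1: "integrable lborel (\<lambda>s. indicator {\<tau><..} s * \<bar>m0 (s - \<tau>)\<bar>)"
    using shift_integrable[OF m0a] by simp
  have i2: "integrable lborel (\<lambda>s. indicator {0..\<tau>} s * \<bar>N (\<tau> - s)\<bar>)"
    using reflect_integral(1)[OF cN] by simp
  have "(LINT s:{0<..}|lborel. \<bar>n \<tau> s\<bar>) \<le> integral\<^sup>L lborel (\<lambda>s.
     indicator {\<tau><..} s * \<bar>m0 (s - \<tau>)\<bar> + indicator {0..\<tau>} s * \<bar>N (\<tau> - s)\<bar>)"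
    unfolding sli_real
    by (rule integral_mono_AE'[OF Bochner_Integration.integrable_add[OF i1 i2] n_pointwise[OF tau]]) auto
  also have "\<dots> = integral\<^sup>L lborel (\<lambda>s. indicator {0<..} s * \<bar>m0 s\<bar>) + integral {0..\<tau>} (\<lambda>u. \<bar>N u\<bar>)"
    using shift_integral[of \<tau> "\<lambda>s. \<bar>m0 s\<bar>"] reflect_integral(2)[OF cN]
    by (simp add: Bochner_Integration.integral_add[OF i1 i2])
  also have "\<dots> \<le> B + integral {0..\<tau>} (\<lambda>u. \<bar>N u\<bar>)"
    using Bm by (simp add: sli_real)
  finally show ?thesis .
qed

lemma N_le_int:
  assumes tau: "0 \<le> \<tau>"
  shows "\<bar>N \<tau>\<bar> \<le> P * B + P * integral {0..\<tau>} (\<lambda>u. \<bar>N u\<bar>)"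
proof -
  have ni: "integrable lborel (\<lambda>s. P * (indicator {0<..} s * \<bar>n \<tau> s\<bar>))"
    using integrable_abs[OF nint[OF tau, unfolded si_real]] by (simp add: abs_mult)
  have "\<bar>N \<tau>\<bar> = norm (integral\<^sup>L lborel (\<lambda>s. indicator {0<..} s * (a \<tau> s * n \<tau> s)))"
    by (simp add: Neq[OF tau] sli_real)
  also have "\<dots> \<le> integral\<^sup>L lborel (\<lambda>s. norm (indicator {0<..} s * (a \<tau> s * n \<tau> s)))"
    by (rule integral_norm_bound)
  also have "\<dots> \<le> integral\<^sup>L lborel (\<lambda>s. P * (indicator {0<..} s * \<bar>n \<tau> s\<bar>))"
  proof (rule integral_mono'[OF ni])
    fix s :: real
    show "0 \<le> P * (indicator {0<..} s * \<bar>n \<tau> s\<bar>)" using P_nonneg by simp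
    show "norm (indicator {0<..} s * (a \<tau> s * n \<tau> s)) \<le> P * (indicator {0<..} s * \<bar>n \<tau> s\<bar>)"
    proof (cases "s > 0")
      case True
      then have "\<bar>a \<tau> s\<bar> \<le> P" using a_bd[OF tau, of s] by auto
      then show ?thesis using True by (simp add: abs_mult mult_right_mono)
    qed simp
  qed
  also have "\<dots> = P * (LINT s:{0<..}|lborel. \<bar>n \<tau> s\<bar>)"
    by (simp add: sli_real)
  also have "\<dots> \<le> P * (B + integral {0..\<tau>} (\<lambda>u. \<bar>N u\<bar>))"
    by (rule mult_left_mono[OF n_L1[OF tau] P_nonneg])
  finally show ?thesis by (simp add: algebra_simps)
qed

lemma N_bound:
  assumes tau: "0 \<le> \<tau>"
  shows "\<bar>N \<tau>\<bar> \<le> P * B * exp (P * \<tau>)"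
proof (rule gronwall_const[of \<tau> "\<lambda>u. \<bar>N u\<bar>" P "P * B"])
  show "continuous_on {0..\<tau>} (\<lambda>u. \<bar>N u\<bar>)"
    by (intro continuous_intros continuous_on_subset[OF Ncont]) auto
  show "0 \<le> P" by (rule P_nonneg)
  show "\<tau> \<in> {0..\<tau>}" using tau by auto
  fix u assume "u \<in> {0..\<tau>}"
  then show "\<bar>N u\<bar> \<le> P * B + P * integral {0..u} (\<lambda>u. \<bar>N u\<bar>)"
    by (intro N_le_int) auto
qed

lemma n_L1_bound:
  assumes tau: "0 \<le> \<tau>"
  shows "(LINT s:{0<..}|lborel. \<bar>n \<tau> s\<bar>) \<le> B + \<tau> * (P * B * exp (P * \<tau>))"
proof -
  have "integral {0..\<tau>} (\<lambda>u. \<bar>N u\<bar>) \<le> integral {0..\<tau>} (\<lambda>u. P * B * exp (P * \<tau>))"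
  proof (rule integral_le)
    show "(\<lambda>u. \<bar>N u\<bar>) integrable_on {0..\<tau>}"
      by (intro integrable_continuous_real continuous_intros continuous_on_subset[OF Ncont]) auto
    fix u assume u: "u \<in> {0..\<tau>}"
    have "\<bar>N u\<bar> \<le> P * B * exp (P * u)" using u by (intro N_bound) auto
    also have "\<dots> \<le> P * B * exp (P * \<tau>)"
    proof -
      have "0 \<le> (LINT s:{0<..}|lborel. \<bar>m0 s\<bar>)" unfolding sli_real by (intro integral_nonneg_AE) auto
      then have "0 \<le> B" using Bm by linarith
      then show ?thesis using u P_nonneg by (intro mult_left_mono) (auto intro!: mult_left_mono)
    qed
    finally show "\<bar>N u\<bar> \<le> P * B * exp (P * \<tau>)" .
  qed (rule integrable_const_ivl)
  then show ?thesis using n_L1[OF tau] tau by (simp add: algebra_simps)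
qed

end

lemma lipschitz_cont_pmax:
  fixes p :: "real \<Rightarrow> real \<Rightarrow> real"
  assumes pL: "\<And>s1 s2 S1 S2. 0 \<le> s1 \<Longrightarrow> 0 \<le> s2 \<Longrightarrow> \<bar>p s1 S1 - p s2 S2\<bar> \<le> L * dist (s1, S1) (s2, S2)"
  shows "continuous_on UNIV (\<lambda>z::real\<times>real. p (max 0 (fst z)) (snd z))"
  unfolding continuous_on_iff
proof (intro ballI allI impI)
  fix z :: "real \<times> real" and e :: real assume e: "0 < e"
  define L' where "L' = max L 1"
  have L': "L' > 0" "L \<le> L'" by (auto simp: L'_def)
  show "\<exists>d>0. \<forall>z'\<in>UNIV. dist z' z < d \<longrightarrow> dist (p (max 0 (fst z')) (snd z')) (p (max 0 (fst z)) (snd z)) < e"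
  proof (intro exI[of _ "e / L'"] conjI ballI impI)
    show "0 < e / L'" using e L' by simp
    fix z' :: "real \<times> real" assume d: "dist z' z < e / L'"
    have "dist (max 0 (fst z')) (max 0 (fst z)) \<le> dist (fst z') (fst z)"
      by (auto simp: dist_real_def)
    then have "dist (max 0 (fst z'), snd z') (max 0 (fst z), snd z) \<le> dist z' z"
      by (cases z; cases z') (auto simp: dist_Pair_Pair intro!: real_sqrt_le_mono power_mono)
    moreover have "dist (p (max 0 (fst z')) (snd z')) (p (max 0 (fst z)) (snd z))
        \<le> L * dist (max 0 (fst z'), snd z') (max 0 (fst z), snd z)"
      using pL[of "max 0 (fst z')" "max 0 (fst z)" "snd z'" "snd z"] by (simp add: dist_real_def)
    moreover have "L * dist (max 0 (fst z'), snd z') (max 0 (fst z), snd z)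
        \<le> L' * dist (max 0 (fst z'), snd z') (max 0 (fst z), snd z)"
      using L' by (intro mult_right_mono) auto
    moreover have "L' * dist z' z < e" using d L' by (simp add: field_simps)
    ultimately show "dist (p (max 0 (fst z')) (snd z')) (p (max 0 (fst z)) (snd z)) < e"
      using L' by (smt (verit) mult_left_mono)
  qed
qed

locale pdata =
  fixes p :: "real \<Rightarrow> real \<Rightarrow> real" and pinf :: "real \<Rightarrow> real" and P L :: real
  assumes pL: "\<And>s1 s2 S1 S2. 0 \<le> s1 \<Longrightarrow> 0 \<le> s2 \<Longrightarrow> \<bar>p s1 S1 - p s2 S2\<bar> \<le> L * dist (s1, S1) (s2, S2)"
  and pb: "\<And>s S. 0 \<le> s \<Longrightarrow> 0 \<le> p s S \<and> p s S \<le> P"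
  and plim: "\<And>s. 0 \<le> s \<Longrightarrow> ((\<lambda>S. p s S) \<longlongrightarrow> pinf s) at_top"
begin

lemma pc: "continuous_on UNIV (\<lambda>z::real\<times>real. p (max 0 (fst z)) (snd z))"
  by (rule lipschitz_cont_pmax[OF pL])

lemma pc2:
  assumes "continuous_on A g1" "continuous_on A g2"
  shows "continuous_on A (\<lambda>x. p (max 0 (g1 x)) (g2 x))"
proof -
  have "continuous_on A (\<lambda>x. (\<lambda>z::real\<times>real. p (max 0 (fst z)) (snd z)) (g1 x, g2 x))"
    by (intro continuous_on_compose2[OF pc] continuous_intros assms) auto
  then show ?thesis by simp
qed

lemma pinf_bd: "0 \<le> s \<Longrightarrow> 0 \<le> pinf s \<and> pinf s \<le> P"
  using plim[of s] pb[of s]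
  by (auto intro: tendsto_lowerbound tendsto_upperbound simp: eventually_at_top_linorder)

lemma pinf_lip:
  assumes "0 \<le> s1" "0 \<le> s2" shows "\<bar>pinf s1 - pinf s2\<bar> \<le> L * \<bar>s1 - s2\<bar>"
proof -
  have "((\<lambda>S. \<bar>p s1 S - p s2 S\<bar>) \<longlongrightarrow> \<bar>pinf s1 - pinf s2\<bar>) at_top"
    by (intro tendsto_intros plim assms)
  moreover have "\<forall>S. \<bar>p s1 S - p s2 S\<bar> \<le> L * \<bar>s1 - s2\<bar>"
  proof
    fix S show "\<bar>p s1 S - p s2 S\<bar> \<le> L * \<bar>s1 - s2\<bar>"
      using pL[OF assms, of S S] by (simp add: dist_Pair_Pair dist_real_def)
  qed
  ultimately show ?thesis
    by (intro tendsto_upperbound[of "\<lambda>S. \<bar>p s1 S - p s2 S\<bar>"]) (auto simp: eventually_at_top_linorder)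
qed

lemma pinfc: "continuous_on UNIV (\<lambda>s. pinf (max 0 s))"
  unfolding continuous_on_iff
proof (intro ballI allI impI)
  fix z :: real and e :: real assume e: "0 < e"
  define L' where "L' = max L 1"
  have L': "L' > 0" "L \<le> L'" by (auto simp: L'_def)
  show "\<exists>d>0. \<forall>z'\<in>UNIV. dist z' z < d \<longrightarrow> dist (pinf (max 0 z')) (pinf (max 0 z)) < e"
  proof (intro exI[of _ "e / L'"] conjI ballI impI)
    show "0 < e / L'" using e L' by simp
    fix z' :: real assume d: "dist z' z < e / L'"
    have "\<bar>max 0 z' - max 0 z\<bar> \<le> \<bar>z' - z\<bar>" by auto
    then have "\<bar>pinf (max 0 z') - pinf (max 0 z)\<bar> \<le> L' * \<bar>z' - z\<bar>"
      using pinf_lip[of "max 0 z'" "max 0 z"] L'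
      by (smt (verit) mult_left_mono mult_right_mono abs_ge_zero)
    then show "dist (pinf (max 0 z')) (pinf (max 0 z)) < e"
      using d L' by (simp add: dist_real_def field_simps)
  qed
qed

lemma pinfc2: "continuous_on A g \<Longrightarrow> continuous_on A (\<lambda>x. pinf (max 0 (g x)))"
  by (intro continuous_on_compose2[OF pinfc]) auto

lemma pm: "(\<lambda>s. p (max 0 s) c) \<in> borel_measurable borel"
  by (intro borel_measurable_continuous_onI pc2 continuous_intros)

lemma pinfm: "(\<lambda>s. pinf (max 0 s)) \<in> borel_measurable borel"
  by (intro borel_measurable_continuous_onI pinfc)

lemma p_tendsto:
  assumes "0 \<le> s" "filterlim q at_top F"
  shows "((\<lambda>k. p s (q k)) \<longlongrightarrow> pinf s) F"
  using filterlim_compose[OF plim[OF assms(1)] assms(2)] by simp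

lemma exponent_conv:
  fixes g :: "real \<Rightarrow> real" and q :: "nat \<Rightarrow> real \<Rightarrow> real"
  assumes gc: "continuous_on {0..T} g" and gnn: "\<And>\<sigma>. \<sigma> \<in> {0..T} \<Longrightarrow> 0 \<le> g \<sigma>"
    and qc: "\<And>k. continuous_on {0..T} (q k)"
    and qlim: "\<And>\<sigma>. \<sigma> \<in> {0..T} \<Longrightarrow> filterlim (\<lambda>k. q k \<sigma>) at_top sequentially"
  shows "(\<lambda>k. integral {0..T} (\<lambda>\<sigma>. p (g \<sigma>) (q k \<sigma>))) \<longlonglongrightarrow> integral {0..T} (\<lambda>\<sigma>. pinf (g \<sigma>))"
proof -
  have mg: "\<And>\<sigma>. \<sigma> \<in> {0..T} \<Longrightarrow> max 0 (g \<sigma>) = g \<sigma>" using gnn by (simp add: max_def)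
  have e1: "integral {0..T} (\<lambda>\<sigma>. p (g \<sigma>) (q k \<sigma>)) = integral {0..T} (\<lambda>\<sigma>. p (max 0 (g \<sigma>)) (q k \<sigma>))" for k
    by (intro integral_cong) (simp add: mg)
  have e2: "integral {0..T} (\<lambda>\<sigma>. pinf (g \<sigma>)) = integral {0..T} (\<lambda>\<sigma>. pinf (max 0 (g \<sigma>)))"
    by (intro integral_cong) (simp add: mg)
  have "(\<lambda>k. integral {0..T} (\<lambda>\<sigma>. p (max 0 (g \<sigma>)) (q k \<sigma>))) \<longlonglongrightarrow> integral {0..T} (\<lambda>\<sigma>. pinf (max 0 (g \<sigma>)))"
  proof (rule dominated_convergence(2)[where h="\<lambda>_. P"])
    show "(\<lambda>\<sigma>. p (max 0 (g \<sigma>)) (q k \<sigma>)) integrable_on {0..T}" for k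
      by (intro integrable_continuous_real pc2 gc qc)
    show "(\<lambda>_. P) integrable_on {0..T}" by (rule integrable_const_ivl)
    show "norm (p (max 0 (g \<sigma>)) (q k \<sigma>)) \<le> P" if "\<sigma> \<in> {0..T}" for k \<sigma>
      using pb[of "max 0 (g \<sigma>)" "q k \<sigma>"] by auto
    show "(\<lambda>k. p (max 0 (g \<sigma>)) (q k \<sigma>)) \<longlonglongrightarrow> pinf (max 0 (g \<sigma>))" if "\<sigma> \<in> {0..T}" for \<sigma>
      by (rule p_tendsto[OF _ qlim[OF that]]) simp
  qed
  then show ?thesis unfolding e1 e2 .
qed

end

lemma DCT0:
  fixes s :: "nat \<Rightarrow> real \<Rightarrow> real" and w :: "real \<Rightarrow> real"
  assumes "\<And>i. s i \<in> borel_measurable borel" "integrable lborel w"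
    and "AE x in lborel. (\<lambda>i. s i x) \<longlonglongrightarrow> 0"
    and "\<And>i. AE x in lborel. norm (s i x) \<le> w x"
  shows "(\<lambda>i. integral\<^sup>L lborel (s i)) \<longlonglongrightarrow> 0" "\<And>i. integrable lborel (s i)"
proof -
  note X = Bochner_Integration.integral_dominated_convergence[where f="\<lambda>_. 0::real", OF _ _ assms(2) assms(3) assms(4)]
  show "(\<lambda>i. integral\<^sup>L lborel (s i)) \<longlonglongrightarrow> 0" using X assms(1) by simp
  note Y = Bochner_Integration.integrable_dominated_convergence2[where f="\<lambda>_. 0::real", OF _ _ assms(2) assms(3) assms(4)]
  show "\<And>i. integrable lborel (s i)" using Y assms(1) by simp
qed

locale conv_data = pdata p pinf P L for p pinf P L +
  fixes S :: "nat \<Rightarrow> real \<Rightarrow> real" and n :: "nat \<Rightarrow> real \<Rightarrow> real \<Rightarrow> real" and N :: "nat \<Rightarrow> real \<Rightarrow> real"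
    and ni :: "real \<Rightarrow> real \<Rightarrow> real" and Ni :: "real \<Rightarrow> real" and m0 :: "real \<Rightarrow> real" and B :: real
  assumes rk: "\<And>k. renewal_data (\<lambda>\<tau> s. p s (S k \<tau>)) (n k) (N k) m0 P B"
    and ri: "renewal_data (\<lambda>\<tau> s. pinf s) ni Ni m0 P B"
    and Scont: "\<And>k. continuous_on {0..} (S k)"
    and Slim: "\<And>\<sigma>. 0 \<le> \<sigma> \<Longrightarrow> filterlim (\<lambda>k. S k \<sigma>) at_top sequentially"
begin

definition C :: "real \<Rightarrow> real" where "C \<tau> = P * B * exp (P * \<tau>)"

lemma P0: "0 \<le> P" using renewal_data.P_nonneg[OF ri] .

lemma B0: "0 \<le> B"
proof -
  have "0 \<le> (LINT s:{0<..}|lborel. \<bar>m0 s\<bar>)" unfolding sli_real by (intro integral_nonneg_AE) auto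
  then show ?thesis using renewal_data.Bm[OF ri] by linarith
qed

lemma C_mono: "u \<le> \<tau> \<Longrightarrow> C u \<le> C \<tau>"
  unfolding C_def using P0 B0 by (intro mult_left_mono) (auto intro: mult_left_mono)

lemma Nk_bd: "0 \<le> \<tau> \<Longrightarrow> \<bar>N k \<tau>\<bar> \<le> C \<tau>"
  unfolding C_def by (rule renewal_data.N_bound[OF rk])

lemma Ni_bd: "0 \<le> \<tau> \<Longrightarrow> \<bar>Ni \<tau>\<bar> \<le> C \<tau>"
  unfolding C_def by (rule renewal_data.N_bound[OF ri])

lemma nformk: "0 \<le> \<tau> \<Longrightarrow> AE s in lborel. s > 0 \<longrightarrow> n k \<tau> s =
       (if \<tau> < s then m0 (s - \<tau>) * exp (- integral {0..\<tau>} (\<lambda>\<sigma>. p (s - \<tau> + \<sigma>) (S k \<sigma>)))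
        else N k (\<tau> - s) * exp (- integral {0..s} (\<lambda>\<sigma>. p \<sigma> (S k (\<tau> - s + \<sigma>)))))"
  using renewal_data.nform[OF rk] by simp

lemma nformi: "0 \<le> \<tau> \<Longrightarrow> AE s in lborel. s > 0 \<longrightarrow> ni \<tau> s =
       (if \<tau> < s then m0 (s - \<tau>) * exp (- integral {0..\<tau>} (\<lambda>\<sigma>. pinf (s - \<tau> + \<sigma>)))
        else Ni (\<tau> - s) * exp (- integral {0..s} (\<lambda>\<sigma>. pinf \<sigma>)))"
  using renewal_data.nform[OF ri] by simp

lemma Ncontk: "continuous_on {0..} (N k)" using renewal_data.Ncont[OF rk] .
lemma Nconti: "continuous_on {0..} Ni" using renewal_data.Ncont[OF ri] .

lemma Ek1:
  assumes "0 \<le> \<tau>" "\<tau> < s"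
  shows "(\<lambda>k. exp (- integral {0..\<tau>} (\<lambda>\<sigma>. p (s - \<tau> + \<sigma>) (S k \<sigma>)))) \<longlonglongrightarrow>
          exp (- integral {0..\<tau>} (\<lambda>\<sigma>. pinf (s - \<tau> + \<sigma>)))"
proof -
  have "(\<lambda>k. integral {0..\<tau>} (\<lambda>\<sigma>. p (s - \<tau> + \<sigma>) (S k \<sigma>))) \<longlonglongrightarrow> integral {0..\<tau>} (\<lambda>\<sigma>. pinf (s - \<tau> + \<sigma>))"
  proof (rule exponent_conv)
    show "continuous_on {0..\<tau>} (\<lambda>\<sigma>. s - \<tau> + \<sigma>)" by (intro continuous_intros)
    show "\<And>\<sigma>. \<sigma> \<in> {0..\<tau>} \<Longrightarrow> 0 \<le> s - \<tau> + \<sigma>" using assms by auto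
    show "\<And>k. continuous_on {0..\<tau>} (S k)" by (rule continuous_on_subset[OF Scont]) auto
    show "\<And>\<sigma>. \<sigma> \<in> {0..\<tau>} \<Longrightarrow> filterlim (\<lambda>k. S k \<sigma>) at_top sequentially" by (intro Slim) auto
  qed
  then show ?thesis by (intro tendsto_intros)
qed

lemma Ek2:
  assumes "0 \<le> s" "s \<le> \<tau>"
  shows "(\<lambda>k. exp (- integral {0..s} (\<lambda>\<sigma>. p \<sigma> (S k (\<tau> - s + \<sigma>))))) \<longlonglongrightarrow>
          exp (- integral {0..s} (\<lambda>\<sigma>. pinf \<sigma>))"
proof -
  have "(\<lambda>k. integral {0..s} (\<lambda>\<sigma>. p ((\<lambda>\<sigma>. \<sigma>) \<sigma>) ((\<lambda>k \<sigma>. S k (\<tau> - s + \<sigma>)) k \<sigma>))) \<longlonglongrightarrow> integral {0..s} (\<lambda>\<sigma>. pinf ((\<lambda>\<sigma>. \<sigma>) \<sigma>))"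
  proof (rule exponent_conv)
    show "continuous_on {0..s} (\<lambda>\<sigma>. \<sigma>)" by (intro continuous_intros)
    show "\<And>\<sigma>. \<sigma> \<in> {0..s} \<Longrightarrow> 0 \<le> \<sigma>" by auto
    show "\<And>k. continuous_on {0..s} (\<lambda>\<sigma>. S k (\<tau> - s + \<sigma>))"
      by (intro continuous_on_compose2[OF Scont] continuous_intros) (use assms in auto)
    show "\<And>\<sigma>. \<sigma> \<in> {0..s} \<Longrightarrow> filterlim (\<lambda>k. S k (\<tau> - s + \<sigma>)) at_top sequentially"
      by (intro Slim) (use assms in auto)
  qed
  then show ?thesis by (intro tendsto_intros)
qed

definition g :: "nat \<Rightarrow> real \<Rightarrow> real \<Rightarrow> real" where "g k \<tau> s = p s (S k \<tau>) * n k \<tau> s"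
definition gi :: "real \<Rightarrow> real \<Rightarrow> real" where "gi \<tau> s = pinf s * ni \<tau> s"

lemma nkm: "0 \<le> \<tau> \<Longrightarrow> (\<lambda>s. indicator {0<..} s * n k \<tau> s) \<in> borel_measurable borel"
  using borel_measurable_integrable[OF renewal_data.nint[OF rk, unfolded si_real]] by simp
lemma nim: "0 \<le> \<tau> \<Longrightarrow> (\<lambda>s. indicator {0<..} s * ni \<tau> s) \<in> borel_measurable borel"
  using borel_measurable_integrable[OF renewal_data.nint[OF ri, unfolded si_real]] by simp

lemma Gm: assumes "0 \<le> \<tau>"
  shows "(\<lambda>s. indicator {0<..} s * (g k \<tau> s - gi \<tau> s)) \<in> borel_measurable borel"
proof -
  have "(\<lambda>s. p (max 0 s) (S k \<tau>) * (indicator {0<..} s * n k \<tau> s) - pinf (max 0 s) * (indicator {0<..} s * ni \<tau> s))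
     \<in> borel_measurable borel"
    using nkm[OF assms] nim[OF assms] pm pinfm by measurable
  moreover have "(\<lambda>s. p (max 0 s) (S k \<tau>) * (indicator {0<..} s * n k \<tau> s) - pinf (max 0 s) * (indicator {0<..} s * ni \<tau> s))
     = (\<lambda>s. indicator {0<..} s * (g k \<tau> s - gi \<tau> s))"
    by (auto simp: fun_eq_iff indicator_def g_def gi_def)
  ultimately show ?thesis by simp
qed

lemma Gkm: assumes "0 \<le> \<tau>"
  shows "(\<lambda>s. indicator {0<..} s * g k \<tau> s) \<in> borel_measurable borel"
proof -
  have "(\<lambda>s. p (max 0 s) (S k \<tau>) * (indicator {0<..} s * n k \<tau> s))
     \<in> borel_measurable borel"
    using nkm[OF assms] pm by measurable
  moreover have "(\<lambda>s. p (max 0 s) (S k \<tau>) * (indicator {0<..} s * n k \<tau> s))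
     = (\<lambda>s. indicator {0<..} s * g k \<tau> s)"
    by (auto simp: fun_eq_iff indicator_def g_def)
  ultimately show ?thesis by simp
qed

lemma Gim: assumes "0 \<le> \<tau>"
  shows "(\<lambda>s. indicator {0<..} s * gi \<tau> s) \<in> borel_measurable borel"
proof -
  have "(\<lambda>s. pinf (max 0 s) * (indicator {0<..} s * ni \<tau> s))
     \<in> borel_measurable borel"
    using nim[OF assms] pinfm by measurable
  moreover have "(\<lambda>s. pinf (max 0 s) * (indicator {0<..} s * ni \<tau> s))
     = (\<lambda>s. indicator {0<..} s * gi \<tau> s)"
    by (auto simp: fun_eq_iff indicator_def gi_def)
  ultimately show ?thesis by simp
qed


lemma m0a: "integrable lborel (\<lambda>s. indicator {0<..} s * \<bar>m0 s\<bar>)"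
  using integrable_abs[OF renewal_data.m0int[OF ri, unfolded si_real]] by (simp add: abs_mult)

lemma npk: "0 \<le> \<tau> \<Longrightarrow> AE s in lborel. indicator {0<..} s * \<bar>n k \<tau> s\<bar> \<le>
     indicator {\<tau><..} s * \<bar>m0 (s - \<tau>)\<bar> + indicator {0..\<tau>} s * \<bar>N k (\<tau> - s)\<bar>"
  by (rule renewal_data.n_pointwise[OF rk])

lemma npi: "0 \<le> \<tau> \<Longrightarrow> AE s in lborel. indicator {0<..} s * \<bar>ni \<tau> s\<bar> \<le>
     indicator {\<tau><..} s * \<bar>m0 (s - \<tau>)\<bar> + indicator {0..\<tau>} s * \<bar>Ni (\<tau> - s)\<bar>"
  by (rule renewal_data.n_pointwise[OF ri])

lemma E1_conv:
  assumes tau: "0 \<le> \<tau>"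
  shows "(\<lambda>k. integral\<^sup>L lborel (\<lambda>s. indicator {\<tau><..} s * \<bar>g k \<tau> s - gi \<tau> s\<bar>)) \<longlonglongrightarrow> 0"
    and "\<And>k. integrable lborel (\<lambda>s. indicator {\<tau><..} s * \<bar>g k \<tau> s - gi \<tau> s\<bar>)"
proof -
  have wi: "integrable lborel (\<lambda>s. 2 * P * (indicator {\<tau><..} s * \<bar>m0 (s - \<tau>)\<bar>))"
    using shift_integrable[OF m0a, of \<tau>] by simp
  have meas: "(\<lambda>s. indicator {\<tau><..} s * \<bar>g k \<tau> s - gi \<tau> s\<bar>) \<in> borel_measurable borel" for k
  proof -
    have "(\<lambda>s. indicator {\<tau><..} s * \<bar>indicator {0<..} s * (g k \<tau> s - gi \<tau> s)\<bar>) \<in> borel_measurable borel"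
      using Gm[OF tau, of k] by measurable
    moreover have "(\<lambda>s. indicator {\<tau><..} s * \<bar>indicator {0<..} s * (g k \<tau> s - gi \<tau> s)\<bar>) =
        (\<lambda>s. indicator {\<tau><..} s * \<bar>g k \<tau> s - gi \<tau> s\<bar>)"
      using tau by (auto simp: fun_eq_iff indicator_def)
    ultimately show ?thesis by simp
  qed
  have AEf: "AE s in lborel. (\<forall>k. s > 0 \<longrightarrow> n k \<tau> s =
       (if \<tau> < s then m0 (s - \<tau>) * exp (- integral {0..\<tau>} (\<lambda>\<sigma>. p (s - \<tau> + \<sigma>) (S k \<sigma>)))
        else N k (\<tau> - s) * exp (- integral {0..s} (\<lambda>\<sigma>. p \<sigma> (S k (\<tau> - s + \<sigma>)))))) \<and>
     (s > 0 \<longrightarrow> ni \<tau> s =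
       (if \<tau> < s then m0 (s - \<tau>) * exp (- integral {0..\<tau>} (\<lambda>\<sigma>. pinf (s - \<tau> + \<sigma>)))
        else Ni (\<tau> - s) * exp (- integral {0..s} (\<lambda>\<sigma>. pinf \<sigma>))))"
    using nformk[OF tau] nformi[OF tau] unfolding AE_conj_iff AE_all_countable by auto
  have lim: "AE s in lborel. (\<lambda>k. indicator {\<tau><..} s * \<bar>g k \<tau> s - gi \<tau> s\<bar>) \<longlonglongrightarrow> 0"
    using AEf
  proof eventually_elim
    case (elim s)
    show ?case
    proof (cases "\<tau> < s")
      case True
      then have s0: "s > 0" using tau by auto
      have "(\<lambda>k. g k \<tau> s) \<longlonglongrightarrow> gi \<tau> s"
        unfolding g_def gi_def using elim True s0
        by (simp, intro tendsto_intros p_tendsto Slim Ek1 tau True) (use s0 in auto)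
      then have "(\<lambda>k. \<bar>g k \<tau> s - gi \<tau> s\<bar>) \<longlonglongrightarrow> \<bar>gi \<tau> s - gi \<tau> s\<bar>"
        by (intro tendsto_intros)
      then show ?thesis using True by simp
    qed simp
  qed
  have bnd: "AE s in lborel. norm (indicator {\<tau><..} s * \<bar>g k \<tau> s - gi \<tau> s\<bar>) \<le> 2 * P * (indicator {\<tau><..} s * \<bar>m0 (s - \<tau>)\<bar>)" for k
    using npk[OF tau, of k] npi[OF tau]
  proof eventually_elim
    case (elim s)
    show ?case
    proof (cases "\<tau> < s")
      case True
      then have s0: "s > 0" using tau by auto
      have a1: "\<bar>n k \<tau> s\<bar> \<le> \<bar>m0 (s - \<tau>)\<bar>" using elim True s0 by simp
      have a2: "\<bar>ni \<tau> s\<bar> \<le> \<bar>m0 (s - \<tau>)\<bar>" using elim True s0 by simp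
      have "\<bar>g k \<tau> s\<bar> \<le> P * \<bar>m0 (s - \<tau>)\<bar>"
        unfolding g_def abs_mult using pb[of s "S k \<tau>"] s0 a1 by (intro mult_mono) auto
      moreover have "\<bar>gi \<tau> s\<bar> \<le> P * \<bar>m0 (s - \<tau>)\<bar>"
        unfolding gi_def abs_mult using pinf_bd[of s] s0 a2 by (intro mult_mono) auto
      ultimately show ?thesis using True by simp
    qed (simp add: P0)
  qed
  show "(\<lambda>k. integral\<^sup>L lborel (\<lambda>s. indicator {\<tau><..} s * \<bar>g k \<tau> s - gi \<tau> s\<bar>)) \<longlonglongrightarrow> 0"
    by (rule DCT0(1)[OF meas wi lim bnd])
  show "\<And>k. integrable lborel (\<lambda>s. indicator {\<tau><..} s * \<bar>g k \<tau> s - gi \<tau> s\<bar>)"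
    by (rule DCT0(2)[OF meas wi lim bnd])
qed

definition D :: "nat \<Rightarrow> real \<Rightarrow> real" where "D k u = \<bar>N k u - Ni u\<bar>"

lemma Dc: "continuous_on {0..} (D k)"
  unfolding D_def by (intro continuous_intros Ncontk Nconti)

lemma D0: "0 \<le> D k u" by (simp add: D_def)

lemma Dmc: "continuous_on UNIV (\<lambda>s. D k (max 0 (\<tau> - s)))"
  by (intro continuous_on_compose2[OF Dc] continuous_intros) auto

lemma E2_conv:
  assumes tau: "0 \<le> \<tau>"
  shows "(\<lambda>k. integral\<^sup>L lborel (\<lambda>s. indicator {0<..\<tau>} s * max 0 (\<bar>g k \<tau> s - gi \<tau> s\<bar> - P * D k (\<tau> - s)))) \<longlonglongrightarrow> 0"
    and "\<And>k. integrable lborel (\<lambda>s. indicator {0<..\<tau>} s * max 0 (\<bar>g k \<tau> s - gi \<tau> s\<bar> - P * D k (\<tau> - s)))"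
proof -
  have wi: "integrable lborel (\<lambda>s. indicator {0..\<tau>} s *\<^sub>R (2 * P * C \<tau>))"
    by (rule borel_integrable_compact) auto
  have meas: "(\<lambda>s. indicator {0<..\<tau>} s * max 0 (\<bar>g k \<tau> s - gi \<tau> s\<bar> - P * D k (\<tau> - s))) \<in> borel_measurable borel" for k
  proof -
    have "(\<lambda>s. indicator {0<..\<tau>} s * max 0 (\<bar>indicator {0<..} s * (g k \<tau> s - gi \<tau> s)\<bar> - P * D k (max 0 (\<tau> - s)))) \<in> borel_measurable borel"
      using Gm[OF tau, of k] borel_measurable_continuous_onI[OF Dmc[of k \<tau>]] by measurable
    moreover have "(\<lambda>s. indicator {0<..\<tau>} s * max 0 (\<bar>indicator {0<..} s * (g k \<tau> s - gi \<tau> s)\<bar> - P * D k (max 0 (\<tau> - s)))) =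
        (\<lambda>s. indicator {0<..\<tau>} s * max 0 (\<bar>g k \<tau> s - gi \<tau> s\<bar> - P * D k (\<tau> - s)))"
      using tau by (auto simp: fun_eq_iff indicator_def)
    ultimately show ?thesis by simp
  qed
  have AEf: "AE s in lborel. (\<forall>k. s > 0 \<longrightarrow> n k \<tau> s =
       (if \<tau> < s then m0 (s - \<tau>) * exp (- integral {0..\<tau>} (\<lambda>\<sigma>. p (s - \<tau> + \<sigma>) (S k \<sigma>)))
        else N k (\<tau> - s) * exp (- integral {0..s} (\<lambda>\<sigma>. p \<sigma> (S k (\<tau> - s + \<sigma>)))))) \<and>
     (s > 0 \<longrightarrow> ni \<tau> s =
       (if \<tau> < s then m0 (s - \<tau>) * exp (- integral {0..\<tau>} (\<lambda>\<sigma>. pinf (s - \<tau> + \<sigma>)))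
        else Ni (\<tau> - s) * exp (- integral {0..s} (\<lambda>\<sigma>. pinf \<sigma>))))"
    using nformk[OF tau] nformi[OF tau] unfolding AE_conj_iff AE_all_countable by auto
  have lim: "AE s in lborel. (\<lambda>k. indicator {0<..\<tau>} s * max 0 (\<bar>g k \<tau> s - gi \<tau> s\<bar> - P * D k (\<tau> - s))) \<longlonglongrightarrow> 0"
    using AEf
  proof eventually_elim
    case (elim s)
    show ?case
    proof (cases "s \<in> {0<..\<tau>}")
      case True
      then have s0: "s > 0" "s \<le> \<tau>" by auto
      define Ek where "Ek k = exp (- integral {0..s} (\<lambda>\<sigma>. p \<sigma> (S k (\<tau> - s + \<sigma>))))" for k
      define Ei where "Ei = exp (- integral {0..s} (\<lambda>\<sigma>. pinf \<sigma>))"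
      define ak where "ak k = p s (S k \<tau>) * Ek k" for k
      define ai where "ai = pinf s * Ei"
      have gk: "g k \<tau> s = ak k * N k (\<tau> - s)" for k
        using elim s0 by (simp add: g_def ak_def Ek_def)
      have gi: "gi \<tau> s = ai * Ni (\<tau> - s)"
        using elim s0 by (simp add: gi_def ai_def Ei_def)
      have Ek1: "Ek k \<le> 1" for k
        unfolding Ek_def by (intro exp_neg_integral_le1) (auto intro!: conjunct1[OF pb])
      have ak_bd: "\<bar>ak k\<bar> \<le> P" for k
      proof -
        have "\<bar>p s (S k \<tau>)\<bar> * \<bar>Ek k\<bar> \<le> P * 1"
          using pb[of s "S k \<tau>"] s0 Ek1[of k] P0 by (intro mult_mono) (auto simp: Ek_def)
        then show ?thesis by (simp add: ak_def abs_mult)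
      qed
      have aconv: "ak \<longlonglongrightarrow> ai"
        unfolding ak_def ai_def Ek_def Ei_def
        by (intro tendsto_intros p_tendsto Slim Ek2) (use s0 in auto)
      have up: "max 0 (\<bar>g k \<tau> s - gi \<tau> s\<bar> - P * D k (\<tau> - s)) \<le> \<bar>ak k - ai\<bar> * \<bar>Ni (\<tau> - s)\<bar>" for k
      proof -
        have "g k \<tau> s - gi \<tau> s = (ak k - ai) * Ni (\<tau> - s) + ak k * (N k (\<tau> - s) - Ni (\<tau> - s))"
          unfolding gk gi by (simp add: algebra_simps)
        then have "\<bar>g k \<tau> s - gi \<tau> s\<bar> \<le> \<bar>ak k - ai\<bar> * \<bar>Ni (\<tau> - s)\<bar> + \<bar>ak k\<bar> * D k (\<tau> - s)"
          by (simp add: D_def abs_mult[symmetric] abs_triangle_ineq)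
        moreover have "\<bar>ak k\<bar> * D k (\<tau> - s) \<le> P * D k (\<tau> - s)"
          using ak_bd[of k] D0 by (intro mult_right_mono) auto
        ultimately show ?thesis by auto
      qed
      have "(\<lambda>k. \<bar>ak k - ai\<bar> * \<bar>Ni (\<tau> - s)\<bar>) \<longlonglongrightarrow> \<bar>ai - ai\<bar> * \<bar>Ni (\<tau> - s)\<bar>"
        by (intro tendsto_intros aconv)
      then have hl: "(\<lambda>k. \<bar>ak k - ai\<bar> * \<bar>Ni (\<tau> - s)\<bar>) \<longlonglongrightarrow> 0" by simp
      have ev1: "eventually (\<lambda>k. (0::real) \<le> max 0 (\<bar>g k \<tau> s - gi \<tau> s\<bar> - P * D k (\<tau> - s))) sequentially"
        by (intro always_eventually allI) simp
      have ev2: "eventually (\<lambda>k. max 0 (\<bar>g k \<tau> s - gi \<tau> s\<bar> - P * D k (\<tau> - s)) \<le> \<bar>ak k - ai\<bar> * \<bar>Ni (\<tau> - s)\<bar>) sequentially"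
        by (intro always_eventually allI up)
      have "(\<lambda>k. max 0 (\<bar>g k \<tau> s - gi \<tau> s\<bar> - P * D k (\<tau> - s))) \<longlonglongrightarrow> 0"
        by (rule tendsto_sandwich[OF ev1 ev2 tendsto_const hl])
      then show ?thesis using True by simp
    qed simp
  qed
  have bnd: "AE s in lborel. norm (indicator {0<..\<tau>} s * max 0 (\<bar>g k \<tau> s - gi \<tau> s\<bar> - P * D k (\<tau> - s)))
       \<le> indicator {0..\<tau>} s *\<^sub>R (2 * P * C \<tau>)" for k
    using npk[OF tau, of k] npi[OF tau]
  proof eventually_elim
    case (elim s)
    show ?case
    proof (cases "s \<in> {0<..\<tau>}")
      case True
      then have s0: "s > 0" "s \<le> \<tau>" by auto
      have a1: "\<bar>n k \<tau> s\<bar> \<le> C \<tau>"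
        using elim s0 Nk_bd[of "\<tau> - s" k] C_mono[of "\<tau> - s" \<tau>] by simp
      have a2: "\<bar>ni \<tau> s\<bar> \<le> C \<tau>"
        using elim s0 Ni_bd[of "\<tau> - s"] C_mono[of "\<tau> - s" \<tau>] by simp
      have "\<bar>g k \<tau> s\<bar> \<le> P * C \<tau>"
        unfolding g_def abs_mult using pb[of s "S k \<tau>"] s0 a1 by (intro mult_mono) auto
      moreover have "\<bar>gi \<tau> s\<bar> \<le> P * C \<tau>"
        unfolding gi_def abs_mult using pinf_bd[of s] s0 a2 by (intro mult_mono) auto
      moreover have "P * D k (\<tau> - s) \<ge> 0" using P0 D0 by simp
      moreover have "\<bar>g k \<tau> s - gi \<tau> s\<bar> \<le> \<bar>g k \<tau> s\<bar> + \<bar>gi \<tau> s\<bar>" by (rule abs_triangle_ineq4)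
      ultimately have "max 0 (\<bar>g k \<tau> s - gi \<tau> s\<bar> - P * D k (\<tau> - s)) \<le> 2 * P * C \<tau>"
        using P0 by linarith
      moreover have "indicator {0<..\<tau>} s = (1::real)" "indicator {0..\<tau>} s = (1::real)" using s0 by auto
      ultimately show ?thesis by simp
    next
      case False
      have "0 \<le> C \<tau>" unfolding C_def using P0 B0 by simp
      moreover have "indicator {0<..\<tau>} s = (0::real)" using False by simp
      ultimately show ?thesis using P0 by (simp add: indicator_def)
    qed
  qed
  show "(\<lambda>k. integral\<^sup>L lborel (\<lambda>s. indicator {0<..\<tau>} s * max 0 (\<bar>g k \<tau> s - gi \<tau> s\<bar> - P * D k (\<tau> - s)))) \<longlonglongrightarrow> 0"
    by (rule DCT0(1)[OF meas wi lim bnd])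
  show "\<And>k. integrable lborel (\<lambda>s. indicator {0<..\<tau>} s * max 0 (\<bar>g k \<tau> s - gi \<tau> s\<bar> - P * D k (\<tau> - s)))"
    by (rule DCT0(2)[OF meas wi lim bnd])
qed


definition E1 :: "nat \<Rightarrow> real \<Rightarrow> real" where
  "E1 k \<tau> = integral\<^sup>L lborel (\<lambda>s. indicator {\<tau><..} s * \<bar>g k \<tau> s - gi \<tau> s\<bar>)"
definition E2 :: "nat \<Rightarrow> real \<Rightarrow> real" where
  "E2 k \<tau> = integral\<^sup>L lborel (\<lambda>s. indicator {0<..\<tau>} s * max 0 (\<bar>g k \<tau> s - gi \<tau> s\<bar> - P * D k (\<tau> - s)))"

lemma D_bound:
  assumes tau: "0 \<le> \<tau>"
  shows "D k \<tau> \<le> E1 k \<tau> + E2 k \<tau> + P * integral {0..\<tau>} (D k)"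
proof -
  have cD: "continuous_on {0..\<tau>} (D k)" by (rule continuous_on_subset[OF Dc]) auto
  have igk: "integrable lborel (\<lambda>s. indicator {0<..} s * g k \<tau> s)"
  proof (rule Bochner_Integration.integrable_bound)
    show "(\<lambda>s. indicator {0<..} s * g k \<tau> s) \<in> borel_measurable lborel" using Gkm[OF tau] by simp
    show "integrable lborel (\<lambda>s. P * (indicator {0<..} s * n k \<tau> s))"
      using renewal_data.nint[OF rk tau, unfolded si_real] by simp
    show "AE s in lborel. norm (indicator {0<..} s * g k \<tau> s) \<le> norm (P * (indicator {0<..} s * n k \<tau> s))"
    proof (intro AE_I2)
      fix s :: real
      show "norm (indicator {0<..} s * g k \<tau> s) \<le> norm (P * (indicator {0<..} s * n k \<tau> s))"
      proof (cases "s > 0")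
        case True
        then show ?thesis unfolding g_def using pb[of s "S k \<tau>"] P0
          by (simp add: abs_mult mult_right_mono)
      qed simp
    qed
  qed
  have igi: "integrable lborel (\<lambda>s. indicator {0<..} s * gi \<tau> s)"
  proof (rule Bochner_Integration.integrable_bound)
    show "(\<lambda>s. indicator {0<..} s * gi \<tau> s) \<in> borel_measurable lborel" using Gim[OF tau] by simp
    show "integrable lborel (\<lambda>s. P * (indicator {0<..} s * ni \<tau> s))"
      using renewal_data.nint[OF ri tau, unfolded si_real] by simp
    show "AE s in lborel. norm (indicator {0<..} s * gi \<tau> s) \<le> norm (P * (indicator {0<..} s * ni \<tau> s))"
    proof (intro AE_I2)
      fix s :: real
      show "norm (indicator {0<..} s * gi \<tau> s) \<le> norm (P * (indicator {0<..} s * ni \<tau> s))"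
      proof (cases "s > 0")
        case True
        then show ?thesis unfolding gi_def using pinf_bd[of s] P0
          by (simp add: abs_mult mult_right_mono)
      qed simp
    qed
  qed
  have Nk: "N k \<tau> = integral\<^sup>L lborel (\<lambda>s. indicator {0<..} s * g k \<tau> s)"
    using renewal_data.Neq[OF rk tau] by (simp add: sli_real g_def)
  have Ni: "Ni \<tau> = integral\<^sup>L lborel (\<lambda>s. indicator {0<..} s * gi \<tau> s)"
    using renewal_data.Neq[OF ri tau] by (simp add: sli_real gi_def)
  have i3: "integrable lborel (\<lambda>s. P * (indicator {0..\<tau>} s * D k (\<tau> - s)))"
    using reflect_integral(1)[OF cD] by simp
  have iU: "integrable lborel (\<lambda>s. indicator {\<tau><..} s * \<bar>g k \<tau> s - gi \<tau> s\<bar> +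
      indicator {0<..\<tau>} s * max 0 (\<bar>g k \<tau> s - gi \<tau> s\<bar> - P * D k (\<tau> - s)) +
      P * (indicator {0..\<tau>} s * D k (\<tau> - s)))"
    by (intro Bochner_Integration.integrable_add E1_conv(2)[OF tau] E2_conv(2)[OF tau] i3)
  have "D k \<tau> = norm (integral\<^sup>L lborel (\<lambda>s. indicator {0<..} s * g k \<tau> s - indicator {0<..} s * gi \<tau> s))"
    unfolding D_def Nk Ni by (simp add: Bochner_Integration.integral_diff[OF igk igi])
  also have "\<dots> \<le> integral\<^sup>L lborel (\<lambda>s. norm (indicator {0<..} s * g k \<tau> s - indicator {0<..} s * gi \<tau> s))"
    by (rule integral_norm_bound)
  also have "\<dots> \<le> integral\<^sup>L lborel (\<lambda>s. indicator {\<tau><..} s * \<bar>g k \<tau> s - gi \<tau> s\<bar> +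
      indicator {0<..\<tau>} s * max 0 (\<bar>g k \<tau> s - gi \<tau> s\<bar> - P * D k (\<tau> - s)) +
      P * (indicator {0..\<tau>} s * D k (\<tau> - s)))"
  proof (rule integral_mono'[OF iU])
    fix s :: real
    have nn: "0 \<le> P * (indicator {0..\<tau>} s * D k (\<tau> - s))" using P0 D0 by simp
    show "0 \<le> indicator {\<tau><..} s * \<bar>g k \<tau> s - gi \<tau> s\<bar> +
      indicator {0<..\<tau>} s * max 0 (\<bar>g k \<tau> s - gi \<tau> s\<bar> - P * D k (\<tau> - s)) +
      P * (indicator {0..\<tau>} s * D k (\<tau> - s))"
      using nn by (intro add_nonneg_nonneg) auto
    show "norm (indicator {0<..} s * g k \<tau> s - indicator {0<..} s * gi \<tau> s) \<le> indicator {\<tau><..} s * \<bar>g k \<tau> s - gi \<tau> s\<bar> +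
      indicator {0<..\<tau>} s * max 0 (\<bar>g k \<tau> s - gi \<tau> s\<bar> - P * D k (\<tau> - s)) +
      P * (indicator {0..\<tau>} s * D k (\<tau> - s))"
    proof (cases "s > \<tau>")
      case True
      then have "indicator {0<..} s = (1::real)" "indicator {\<tau><..} s = (1::real)" "indicator {0<..\<tau>} s = (0::real)"
        using tau by auto
      then show ?thesis using nn by (simp add: right_diff_distrib[symmetric])
    next
      case False
      show ?thesis
      proof (cases "s > 0")
        case True
        then have "indicator {0<..} s = (1::real)" "indicator {\<tau><..} s = (0::real)" "indicator {0<..\<tau>} s = (1::real)"
          "indicator {0..\<tau>} s = (1::real)"
          using False by auto
        then show ?thesis by (simp add: right_diff_distrib[symmetric])
      next
        case f2: False
        then have "indicator {0<..} s = (0::real)" "indicator {\<tau><..} s = (0::real)" "indicator {0<..\<tau>} s = (0::real)"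
          using False tau by auto
        then show ?thesis using nn by simp
      qed
    qed
  qed
  also have "\<dots> = E1 k \<tau> + E2 k \<tau> + P * integral {0..\<tau>} (D k)"
    unfolding E1_def E2_def
    using reflect_integral(2)[OF cD]
    by (simp add: Bochner_Integration.integral_add[OF Bochner_Integration.integrable_add[OF E1_conv(2)[OF tau] E2_conv(2)[OF tau]] i3]
        Bochner_Integration.integral_add[OF E1_conv(2)[OF tau] E2_conv(2)[OF tau]])
  finally show ?thesis .
qed

end

context conv_data begin

lemma E_lim: "0 \<le> \<tau> \<Longrightarrow> (\<lambda>k. E1 k \<tau> + E2 k \<tau>) \<longlonglongrightarrow> 0"
  unfolding E1_def E2_def using tendsto_add[OF E1_conv(1) E2_conv(1)] by simp

lemma N_conv:
  assumes t: "0 \<le> t"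
  shows "(\<lambda>k. D k t) \<longlonglongrightarrow> 0"
proof -
  define F where "F k u = integral {0..u} (D k)" for k u
  define e where "e k u = max 0 (D k u - P * F k u)" for k u
  have cD: "continuous_on {0..u} (D k)" for k u by (rule continuous_on_subset[OF Dc]) auto
  have cF: "continuous_on {0..t} (F k)" for k
    unfolding F_def by (intro indefinite_integral_continuous_1 integrable_continuous_real cD)
  have ce: "continuous_on {0..t} (e k)" for k
    unfolding e_def by (intro continuous_intros cF continuous_on_subset[OF Dc]) auto
  have F0: "0 \<le> F k u" for k u
    unfolding F_def by (cases "u \<ge> 0") (auto intro!: integral_nonneg integrable_continuous_real cD D0)
  have e_lim: "(\<lambda>k. e k u) \<longlonglongrightarrow> 0" if u: "0 \<le> u" for u
  proof (rule tendsto_sandwich[OF _ _ tendsto_const E_lim[OF u]])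
    show "eventually (\<lambda>k. 0 \<le> e k u) sequentially" by (simp add: e_def)
    show "eventually (\<lambda>k. e k u \<le> E1 k u + E2 k u) sequentially"
    proof (intro always_eventually allI)
      fix k
      have "D k u \<le> E1 k u + E2 k u + P * F k u" unfolding F_def by (rule D_bound[OF u])
      moreover have "0 \<le> E1 k u" unfolding E1_def by (intro integral_nonneg_AE AE_I2) simp
      moreover have "0 \<le> E2 k u" unfolding E2_def by (intro integral_nonneg_AE AE_I2) simp
      ultimately show "e k u \<le> E1 k u + E2 k u" unfolding e_def by simp
    qed
  qed
  have e_bd: "norm (e k u) \<le> 2 * C t" if "u \<in> {0..t}" for k u
  proof -
    have "e k u \<le> D k u" unfolding e_def using P0 F0[of k u] D0[of k u] by simp
    also have "\<dots> \<le> \<bar>N k u\<bar> + \<bar>Ni u\<bar>" unfolding D_def by (rule abs_triangle_ineq4)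
    also have "\<dots> \<le> C u + C u" using that by (intro add_mono Nk_bd Ni_bd) auto
    also have "\<dots> \<le> 2 * C t" using C_mono[of u t] that by simp
    finally show ?thesis by (simp add: e_def)
  qed
  have Ie: "(\<lambda>k. integral {0..t} (e k)) \<longlonglongrightarrow> integral {0..t} (\<lambda>_. 0::real)"
  proof (rule dominated_convergence(2)[where h="\<lambda>_. 2 * C t"])
    show "e k integrable_on {0..t}" for k by (intro integrable_continuous_real ce)
    show "(\<lambda>_. 2 * C t) integrable_on {0..t}" by (rule integrable_const_ivl)
    show "norm (e k u) \<le> 2 * C t" if "u \<in> {0..t}" for k u using e_bd that .
    show "(\<lambda>k. e k u) \<longlonglongrightarrow> 0" if "u \<in> {0..t}" for u using e_lim that by auto
  qed
  then have Ie0: "(\<lambda>k. integral {0..t} (e k)) \<longlonglongrightarrow> 0" by simp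
  have e0: "0 \<le> e k u" for k u by (simp add: e_def)
  have Fb: "F k t \<le> integral {0..t} (e k) * exp (P * t)" for k
  proof (rule gronwall_const[of t "F k" P])
    show "continuous_on {0..t} (F k)" by (rule cF)
    show "0 \<le> P" by (rule P0)
    show "t \<in> {0..t}" using t by auto
    fix u assume u: "u \<in> {0..t}"
    have cFu: "continuous_on {0..u} (F k)" by (rule continuous_on_subset[OF cF]) (use u in auto)
    have ceu: "continuous_on {0..u} (e k)" by (rule continuous_on_subset[OF ce]) (use u in auto)
    have "F k u = integral {0..u} (D k)" by (simp add: F_def)
    also have "\<dots> \<le> integral {0..u} (\<lambda>v. e k v + P * F k v)"
      by (intro integral_le integrable_continuous_real cD continuous_intros cFu ceu)
         (auto simp: e_def)
    also have "\<dots> = integral {0..u} (e k) + P * integral {0..u} (F k)"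
    proof -
      have i1: "e k integrable_on {0..u}" by (intro integrable_continuous_real ceu)
      have i2: "(\<lambda>v. P * F k v) integrable_on {0..u}" by (intro integrable_continuous_real continuous_intros cFu)
      show ?thesis using integral_add[OF i1 i2] by simp
    qed
    also have "integral {0..u} (e k) \<le> integral {0..t} (e k)"
      by (intro integral_subset_le integrable_continuous_real ce ceu) (use u e0 in auto)
    finally show "F k u \<le> integral {0..t} (e k) + P * integral {0..u} (F k)" by simp
  qed
  have Flim: "(\<lambda>k. F k t) \<longlonglongrightarrow> 0"
  proof (rule tendsto_sandwich[OF _ _ tendsto_const])
    show "eventually (\<lambda>k. 0 \<le> F k t) sequentially" using F0 by simp
    show "eventually (\<lambda>k. F k t \<le> integral {0..t} (e k) * exp (P * t)) sequentially" using Fb by simp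
    show "(\<lambda>k. integral {0..t} (e k) * exp (P * t)) \<longlonglongrightarrow> 0"
      using tendsto_mult_left_zero[OF Ie0] by simp
  qed
  show ?thesis
  proof (rule tendsto_sandwich[OF _ _ tendsto_const])
    show "eventually (\<lambda>k. 0 \<le> D k t) sequentially" using D0 by simp
    show "eventually (\<lambda>k. D k t \<le> e k t + P * F k t) sequentially" by (intro always_eventually allI) (simp add: e_def)
    show "(\<lambda>k. e k t + P * F k t) \<longlonglongrightarrow> 0"
      using tendsto_add[OF e_lim[OF t] tendsto_mult_right_zero[OF Flim]] by simp
  qed
qed

lemma Nk_conv: "0 \<le> t \<Longrightarrow> (\<lambda>k. N k t) \<longlonglongrightarrow> Ni t"
proof -
  assume "0 \<le> t"
  then have "(\<lambda>k. \<bar>N k t - Ni t\<bar>) \<longlonglongrightarrow> 0" using N_conv[of t] unfolding D_def by simp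
  then have "(\<lambda>k. N k t - Ni t) \<longlonglongrightarrow> 0" by (rule tendsto_rabs_zero_cancel)
  then show ?thesis by (rule LIM_zero_cancel)
qed


lemma n_conv:
  assumes t: "0 \<le> t"
  shows "(\<lambda>k. LINT s:{0<..}|lborel. \<bar>n k t s - ni t s\<bar>) \<longlonglongrightarrow> 0"
proof -
  have wi: "integrable lborel (\<lambda>s. 2 * (indicator {t<..} s * \<bar>m0 (s - t)\<bar>) + indicator {0..t} s *\<^sub>R (2 * C t))"
    by (intro Bochner_Integration.integrable_add integrable_mult_right shift_integrable[OF m0a] borel_integrable_compact) auto
  have meas: "(\<lambda>s. indicator {0<..} s * \<bar>n k t s - ni t s\<bar>) \<in> borel_measurable borel" for k
  proof -
    have "(\<lambda>s. \<bar>indicator {0<..} s * n k t s - indicator {0<..} s * ni t s\<bar>) \<in> borel_measurable borel"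
      using nkm[OF t, of k] nim[OF t] by measurable
    moreover have "(\<lambda>s. \<bar>indicator {0<..} s * n k t s - indicator {0<..} s * ni t s\<bar>) =
        (\<lambda>s. indicator {0<..} s * \<bar>n k t s - ni t s\<bar>)"
      by (auto simp: fun_eq_iff indicator_def)
    ultimately show ?thesis by simp
  qed
  have AEf: "AE s in lborel. (\<forall>k. s > 0 \<longrightarrow> n k t s =
       (if t < s then m0 (s - t) * exp (- integral {0..t} (\<lambda>\<sigma>. p (s - t + \<sigma>) (S k \<sigma>)))
        else N k (t - s) * exp (- integral {0..s} (\<lambda>\<sigma>. p \<sigma> (S k (t - s + \<sigma>)))))) \<and>
     (s > 0 \<longrightarrow> ni t s =
       (if t < s then m0 (s - t) * exp (- integral {0..t} (\<lambda>\<sigma>. pinf (s - t + \<sigma>)))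
        else Ni (t - s) * exp (- integral {0..s} (\<lambda>\<sigma>. pinf \<sigma>))))"
    using nformk[OF t] nformi[OF t] unfolding AE_conj_iff AE_all_countable by auto
  have lim: "AE s in lborel. (\<lambda>k. indicator {0<..} s * \<bar>n k t s - ni t s\<bar>) \<longlonglongrightarrow> 0"
    using AEf
  proof eventually_elim
    case (elim s)
    show ?case
    proof (cases "s > 0")
      case s0: True
      have "(\<lambda>k. n k t s) \<longlonglongrightarrow> ni t s"
      proof (cases "t < s")
        case True
        have e: "\<And>k. n k t s = m0 (s - t) * exp (- integral {0..t} (\<lambda>\<sigma>. p (s - t + \<sigma>) (S k \<sigma>)))"
          using elim s0 True by simp
        have e2: "ni t s = m0 (s - t) * exp (- integral {0..t} (\<lambda>\<sigma>. pinf (s - t + \<sigma>)))"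
          using elim s0 True by simp
        show ?thesis unfolding e e2 by (intro tendsto_mult tendsto_const Ek1[OF t True])
      next
        case False
        have e: "\<And>k. n k t s = N k (t - s) * exp (- integral {0..s} (\<lambda>\<sigma>. p \<sigma> (S k (t - s + \<sigma>))))"
          using elim s0 False by simp
        have e2: "ni t s = Ni (t - s) * exp (- integral {0..s} (\<lambda>\<sigma>. pinf \<sigma>))"
          using elim s0 False by simp
        show ?thesis unfolding e e2 using s0 False by (intro tendsto_mult Nk_conv Ek2) auto
      qed
      then have "(\<lambda>k. \<bar>n k t s - ni t s\<bar>) \<longlonglongrightarrow> \<bar>ni t s - ni t s\<bar>" by (intro tendsto_intros)
      then show ?thesis using s0 by simp
    qed simp
  qed
  have bnd: "AE s in lborel. norm (indicator {0<..} s * \<bar>n k t s - ni t s\<bar>) \<le>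
      2 * (indicator {t<..} s * \<bar>m0 (s - t)\<bar>) + indicator {0..t} s *\<^sub>R (2 * C t)" for k
    using npk[OF t, of k] npi[OF t]
  proof eventually_elim
    case (elim s)
    have c: "0 \<le> C t" unfolding C_def using P0 B0 by simp
    show ?case
    proof (cases "s > 0")
      case s0: True
      show ?thesis
      proof (cases "t < s")
        case True
        then have "\<bar>n k t s\<bar> \<le> \<bar>m0 (s - t)\<bar>" "\<bar>ni t s\<bar> \<le> \<bar>m0 (s - t)\<bar>" using elim s0 by auto
        moreover have "\<bar>n k t s - ni t s\<bar> \<le> \<bar>n k t s\<bar> + \<bar>ni t s\<bar>" by (rule abs_triangle_ineq4)
        ultimately show ?thesis using True s0 by (simp add: indicator_def)
      next
        case False
        then have "\<bar>n k t s\<bar> \<le> \<bar>N k (t - s)\<bar>" "\<bar>ni t s\<bar> \<le> \<bar>Ni (t - s)\<bar>" using elim s0 by auto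
        moreover have "\<bar>N k (t - s)\<bar> \<le> C t" "\<bar>Ni (t - s)\<bar> \<le> C t"
          using False s0 Nk_bd[of "t - s" k] Ni_bd[of "t - s"] C_mono[of "t - s" t] by auto
        moreover have "\<bar>n k t s - ni t s\<bar> \<le> \<bar>n k t s\<bar> + \<bar>ni t s\<bar>" by (rule abs_triangle_ineq4)
        ultimately show ?thesis using False s0 by (simp add: indicator_def)
      qed
    next
      case False then show ?thesis using c by (simp add: indicator_def)
    qed
  qed
  show ?thesis unfolding sli_real by (rule DCT0(1)[OF meas wi lim bnd])
qed

end

lemma AE_swap_lborel:
  fixes Q :: "real \<times> 'd::euclidean_space \<Rightarrow> bool"
  assumes "AE z in (lborel::(real\<times>'d) measure). Q z"
  shows "AE x in (lborel::'d measure). AE s in (lborel::real measure). Q (s, x)"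
proof -
  interpret pr: pair_sigma_finite "lborel::real measure" "lborel::'d measure" ..
  have "AE z in (lborel \<Otimes>\<^sub>M lborel :: (real\<times>'d) measure). Q z"
    unfolding lborel_prod by (rule assms)
  then obtain N where N: "{z \<in> space (lborel \<Otimes>\<^sub>M lborel :: (real\<times>'d) measure). \<not> Q z} \<subseteq> N"
    "emeasure (lborel \<Otimes>\<^sub>M lborel :: (real\<times>'d) measure) N = 0" "N \<in> sets (lborel \<Otimes>\<^sub>M lborel :: (real\<times>'d) measure)"
    by (rule AE_E)
  have "AE z in (lborel \<Otimes>\<^sub>M lborel :: (real\<times>'d) measure). z \<notin> N"
    by (rule AE_I'[of N]) (use N in auto)
  then have "AE s in lborel. AE x in lborel. (s, x) \<notin> N"
    by (rule lborel_pair.AE_pair)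
  moreover have "{z \<in> space (lborel \<Otimes>\<^sub>M lborel :: (real\<times>'d) measure). (fst z, snd z) \<notin> N} \<in> sets (lborel \<Otimes>\<^sub>M lborel)"
  proof -
    have "{z \<in> space (lborel \<Otimes>\<^sub>M lborel :: (real\<times>'d) measure). (fst z, snd z) \<notin> N} = space (lborel \<Otimes>\<^sub>M lborel) - N"
      by auto
    then show ?thesis using sets.compl_sets[OF N(3)] by simp
  qed
  ultimately have "AE x in lborel. AE s in lborel. (s, x) \<notin> N"
    using lborel_pair.AE_commute[of "\<lambda>s x. (s, x) \<notin> N"] by simp
  then show ?thesis
  proof eventually_elim
    case (elim x)
    then show ?case
    proof eventually_elim
      case (elim s)
      then show ?case using N(1) by (auto simp: space_pair_measure)
    qed
  qed
qed

lemma integral_bound_any: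
  fixes f :: "real \<Rightarrow> real"
  assumes "0 \<le> \<sigma>" "\<And>u. u \<in> {0..\<sigma>} \<Longrightarrow> \<bar>f u\<bar> \<le> M"
  shows "\<bar>integral {0..\<sigma>} f\<bar> \<le> M * \<sigma>"
proof (cases "f integrable_on {0..\<sigma>}")
  case True
  have "norm (integral {0..\<sigma>} f) \<le> integral {0..\<sigma>} (\<lambda>_. M)"
    by (rule integral_norm_bound_integral[OF True integrable_const_ivl]) (use assms in auto)
  then show ?thesis using assms(1) by (simp add: mult.commute)
next
  case False
  have "0 \<le> M" using assms(2)[of 0] assms(1) by auto
  then show ?thesis using False assms(1) by (simp add: not_integrable_integral)
qed

lemma set_integral_bound_lebesgue:
  fixes f :: "'d::euclidean_space \<Rightarrow> real"
  assumes \<Omega>: "\<Omega> \<in> sets lebesgue" "emeasure lebesgue \<Omega> < \<infinity>" and b: "\<And>y. y \<in> \<Omega> \<Longrightarrow> \<bar>f y\<bar> \<le> M" and M: "0 \<le> M"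
  shows "\<bar>LINT y:\<Omega>|lebesgue. f y\<bar> \<le> M * measure lebesgue \<Omega>"
proof -
  have ii: "integrable lebesgue (\<lambda>y. M * indicator \<Omega> y)"
    using integrable_real_indicator[OF \<Omega>] by simp
  have "\<bar>LINT y:\<Omega>|lebesgue. f y\<bar> = norm (integral\<^sup>L lebesgue (\<lambda>y. indicator \<Omega> y * f y))"
    by (simp add: sli_real)
  also have "\<dots> \<le> integral\<^sup>L lebesgue (\<lambda>y. norm (indicator \<Omega> y * f y))"
    by (rule integral_norm_bound)
  also have "\<dots> \<le> integral\<^sup>L lebesgue (\<lambda>y. M * indicator \<Omega> y)"
    by (rule integral_mono'[OF ii]) (use b M in \<open>auto simp: indicator_def\<close>)
  also have "\<dots> = M * measure lebesgue \<Omega>"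
    using \<Omega> by simp
  finally show ?thesis .
qed

lemma RC_to_RD:
  fixes a :: "real \<Rightarrow> real \<Rightarrow> 'd::euclidean_space \<Rightarrow> real"
  assumes rc: "renewal_char a n0 \<Omega> n N" and x: "x \<in> \<Omega>"
    and abd: "\<And>\<tau> s. 0 \<le> \<tau> \<Longrightarrow> 0 \<le> s \<Longrightarrow> 0 \<le> a \<tau> s x \<and> a \<tau> s x \<le> P"
    and m0i: "set_integrable lborel {0<..} (\<lambda>s. n0 s x)"
    and Bm: "(LINT s:{0<..}|lborel. \<bar>n0 s x\<bar>) \<le> B"
  shows "renewal_data (\<lambda>\<tau> s. a \<tau> s x) (\<lambda>\<tau> s. n \<tau> s x) (\<lambda>\<tau>. N \<tau> x) (\<lambda>s. n0 s x) P B"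
proof -
  have rc': "\<forall>t\<ge>0. \<forall>x\<in>\<Omega>.
        (AE s in lborel. s > 0 \<longrightarrow>
           n t s x = (if t < s
                      then n0 (s - t) x * exp (- integral {0..t} (\<lambda>\<tau>. a \<tau> (s - t + \<tau>) x))
                      else N (t - s) x * exp (- integral {0..s} (\<lambda>\<sigma>. a (t - s + \<sigma>) \<sigma> x)))) \<and>
        set_integrable lborel {0<..} (\<lambda>s. n t s x) \<and>
        N t x = (LINT s:{0<..}|lborel. a t s x * n t s x)"
    and cN: "continuous_on ({0..} \<times> \<Omega>) (\<lambda>z. N (fst z) (snd z))"
    using rc unfolding renewal_char_def by auto
  have cNx: "continuous_on {0..} (\<lambda>\<tau>. N \<tau> x)"
  proof -
    have "continuous_on {0..} (\<lambda>\<tau>. (\<lambda>z. N (fst z) (snd z)) (\<tau>, x))"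
      by (rule continuous_on_compose2[OF cN]) (use x in \<open>auto intro!: continuous_intros\<close>)
    then show ?thesis by simp
  qed
  show ?thesis
    by unfold_locales (use rc' x abd m0i Bm cNx in auto)
qed

lemma outer_conv:
  fixes u :: "nat \<Rightarrow> real \<Rightarrow> 'd::euclidean_space \<Rightarrow> real" and v :: "real \<Rightarrow> 'd \<Rightarrow> real"
  assumes \<Omega>: "\<Omega> \<in> sets borel" "emeasure lborel \<Omega> < \<infinity>"
    and int_u: "\<And>m. integrable (lebesgue_on ({0<..} \<times> \<Omega>)) (\<lambda>z. u m (fst z) (snd z))"
    and int_v: "integrable (lebesgue_on ({0<..} \<times> \<Omega>)) (\<lambda>z. v (fst z) (snd z))"
    and su: "\<And>m x. x \<in> \<Omega> \<Longrightarrow> set_integrable lborel {0<..} (\<lambda>s. u m s x)"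
    and sv: "\<And>x. x \<in> \<Omega> \<Longrightarrow> set_integrable lborel {0<..} (\<lambda>s. v s x)"
    and conv: "AE x in lborel. x \<in> \<Omega> \<longrightarrow> (\<lambda>m. LINT s:{0<..}|lborel. \<bar>u m s x - v s x\<bar>) \<longlonglongrightarrow> 0"
    and bnd: "\<And>m x. x \<in> \<Omega> \<Longrightarrow> (LINT s:{0<..}|lborel. \<bar>u m s x - v s x\<bar>) \<le> K"
  shows "(\<lambda>m. LINT z:({0<..} \<times> \<Omega>)|lebesgue. \<bar>u m (fst z) (snd z) - v (fst z) (snd z)\<bar>) \<longlonglongrightarrow> 0"
proof -
  define A :: "(real \<times> 'd) set" where "A = {0<..} \<times> \<Omega>"
  have Ab: "A \<in> sets (borel :: (real \<times> 'd) measure)"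
  proof -
    have "A \<in> sets (borel \<Otimes>\<^sub>M borel :: (real \<times> 'd) measure)" unfolding A_def using \<Omega>(1) by auto
    then show ?thesis by (subst (asm) borel_prod)
  qed
  have Al: "A \<in> sets lebesgue" using Ab by simp
  define f where "f m z = indicator A z * \<bar>u m (fst z) (snd z) - v (fst z) (snd z)\<bar>" for m z
  have iu: "integrable lebesgue (\<lambda>z. indicator A z * u m (fst z) (snd z))" for m
    using int_u[of m] Al unfolding A_def by (subst (asm) integrable_restrict_space) auto
  have iv: "integrable lebesgue (\<lambda>z. indicator A z * v (fst z) (snd z))"
    using int_v Al unfolding A_def by (subst (asm) integrable_restrict_space) auto
  have feq: "f m = (\<lambda>z. \<bar>indicator A z * u m (fst z) (snd z) - indicator A z * v (fst z) (snd z)\<bar>)" for m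
    by (auto simp: f_def fun_eq_iff indicator_def)
  have fi: "integrable lebesgue (f m)" for m
    unfolding feq by (intro integrable_abs Bochner_Integration.integrable_diff iu iv)
  have fm: "f m \<in> borel_measurable (completion lborel)" for m
    using borel_measurable_integrable[OF fi[of m]] by simp
  have "\<forall>m. \<exists>h. h \<in> borel_measurable lborel \<and> (AE z in lborel. f m z = h z)"
    using completion_ex_borel_measurable_real[OF fm] by blast
  then obtain h where hm: "\<And>m. h m \<in> borel_measurable lborel" and hae: "\<And>m. AE z in lborel. f m z = h m z"
    by metis
  have hi: "integrable lborel (h m)" for m
  proof -
    have "integrable lebesgue (h m)"
      by (rule integrable_cong_AE_imp[OF fi[of m]]) (use measurable_completion[OF hm[of m]] AE_completion[OF hae[of m]] in auto)
    then show ?thesis using integrable_completion[of "h m" lborel] hm[of m] by simp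
  qed
  have int_eq: "integral\<^sup>L lebesgue (f m) = integral\<^sup>L lborel (h m)" for m
  proof -
    have "integral\<^sup>L lebesgue (f m) = integral\<^sup>L lebesgue (h m)"
      by (rule integral_cong_AE) (use fm[of m] measurable_completion[OF hm[of m]] AE_completion[OF hae[of m]] in auto)
    also have "\<dots> = integral\<^sup>L lborel (h m)" by (rule integral_completion) (use hm in simp)
    finally show ?thesis .
  qed
  define H where "H = (\<lambda>m x. (\<integral>s. h m (s, x) \<partial>lborel))"
  have Hx: "H m x = (\<integral>s. h m (s, x) \<partial>lborel)" for m x by (simp add: H_def)
  have hi2: "integrable (lborel \<Otimes>\<^sub>M lborel) (case_prod (\<lambda>s x. h m (s, x)))" for m
    using hi[of m] by (simp add: lborel_prod)
  have fub: "integral\<^sup>L lborel (h m) = integral\<^sup>L lborel (H m)" for m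
  proof -
    have "(\<integral>y. (\<integral>x. h m (x, y) \<partial>lborel) \<partial>lborel) = integral\<^sup>L lborel (h m)"
      using lborel_pair.integral_snd[OF hi2[of m]] by (simp add: lborel_prod)
    moreover have "H m = (\<lambda>y. (\<integral>x. h m (x, y) \<partial>lborel))" by (simp add: H_def fun_eq_iff)
    ultimately show ?thesis by simp
  qed
  have Hi: "integrable lborel (H m)" for m
    using lborel_pair.integrable_snd[OF hi2[of m]] by (simp add: H_def)
  have "AE z in lborel. \<forall>m. f m z = h m z" using hae by (simp add: AE_all_countable)
  then have ae2: "AE x in lborel. AE s in lborel. \<forall>m. f m (s, x) = h m (s, x)"
    by (rule AE_swap_lborel)
  have Hae: "AE x in lborel. \<forall>m. H m x = indicator \<Omega> x * (LINT s:{0<..}|lborel. \<bar>u m s x - v s x\<bar>)"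
    using ae2
  proof eventually_elim
    case (elim x)
    show ?case
    proof
      fix m
      have hmx: "(\<lambda>s. h m (s, x)) \<in> borel_measurable lborel" using hm[of m] by measurable
      show "H m x = indicator \<Omega> x * (LINT s:{0<..}|lborel. \<bar>u m s x - v s x\<bar>)"
      proof (cases "x \<in> \<Omega>")
        case True
        have fmx: "(\<lambda>s. f m (s, x)) = (\<lambda>s. \<bar>indicator {0<..} s * u m s x - indicator {0<..} s * v s x\<bar>)"
          using True by (auto simp: f_def A_def fun_eq_iff indicator_def)
        have mx: "(\<lambda>s. f m (s, x)) \<in> borel_measurable lborel"
          unfolding fmx using borel_measurable_integrable[OF su[OF True, of m, unfolded si_real]]
            borel_measurable_integrable[OF sv[OF True, unfolded si_real]] by measurable
        have "H m x = (\<integral>s. f m (s, x) \<partial>lborel)"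
          unfolding Hx by (rule integral_cong_AE[OF hmx mx]) (use elim in auto)
        also have "\<dots> = (LINT s:{0<..}|lborel. \<bar>u m s x - v s x\<bar>)"
          unfolding sli_real by (rule Bochner_Integration.integral_cong) (auto simp: f_def A_def indicator_def True)
        finally show ?thesis using True by simp
      next
        case False
        have "H m x = (\<integral>s. f m (s, x) \<partial>lborel)"
          unfolding Hx by (rule integral_cong_AE[OF hmx]) (use elim False in \<open>auto simp: f_def A_def\<close>)
        also have "\<dots> = 0" using False by (simp add: f_def A_def)
        finally show ?thesis using False by simp
      qed
    qed
  qed
  have p1: "(\<lambda>_. 0::real) \<in> borel_measurable lborel" by simp
  have p2: "\<And>m. H m \<in> borel_measurable lborel" using Hi by auto
  have p3: "integrable lborel (\<lambda>x. K * indicator \<Omega> x)"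
    using integrable_real_indicator[of \<Omega> lborel] \<Omega> by simp
  have p4: "AE x in lborel. (\<lambda>m. H m x) \<longlonglongrightarrow> 0"
    using Hae conv
  proof eventually_elim
    case (elim x)
    then show ?case by (cases "x \<in> \<Omega>") auto
  qed
  have p5: "AE x in lborel. norm (H m x) \<le> K * indicator \<Omega> x" for m
    using Hae
  proof eventually_elim
    case (elim x)
    show ?case
    proof (cases "x \<in> \<Omega>")
      case True
      have "0 \<le> (LINT s:{0<..}|lborel. \<bar>u m s x - v s x\<bar>)"
        unfolding sli_real by (intro integral_nonneg_AE AE_I2) simp
      then show ?thesis using elim True bnd[OF True, of m] by simp
    qed (use elim in simp)
  qed
  have Hlim: "(\<lambda>m. integral\<^sup>L lborel (H m)) \<longlonglongrightarrow> integral\<^sup>L lborel (\<lambda>_. 0::real)"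
    using Bochner_Integration.integral_dominated_convergence[OF p1 p2 p3 p4 p5] by simp
  show ?thesis
    using Hlim unfolding sli_real by (simp add: f_def[symmetric] A_def[symmetric] int_eq fub)
qed

lemma param_cont:
  fixes W :: "real \<Rightarrow> 'd::euclidean_space \<Rightarrow> real"
  assumes \<Omega>o: "open \<Omega>" and \<Omega>b: "bounded \<Omega>"
    and cW: "continuous_on ({0..} \<times> \<Omega>) (\<lambda>z. W (fst z) (snd z))"
    and bW: "\<And>T. \<exists>M. \<forall>\<sigma>\<in>{0..T}. \<forall>y\<in>\<Omega>. \<bar>W \<sigma> y\<bar> \<le> M"
  shows "continuous_on {0..} (\<lambda>\<sigma>. LINT y:\<Omega>|lebesgue. W \<sigma> y)"
  unfolding continuous_on_sequentially
proof (intro allI ballI impI)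
  fix x :: "nat \<Rightarrow> real" and a :: real
  assume a: "a \<in> {0..}" and xa: "(\<forall>n. x n \<in> {0..}) \<and> x \<longlonglongrightarrow> a"
  then have xs: "\<And>n. x n \<in> {0..}" and lim: "x \<longlonglongrightarrow> a" by auto
  obtain K where K: "\<And>n. norm (x n) \<le> K" using BseqD[OF convergent_imp_Bseq[OF convergentI[OF lim]]] by auto
  have aK: "a \<le> K"
    using LIMSEQ_le_const2[OF lim, of K] K by (auto intro: order_trans[OF abs_ge_self])
  obtain M where M: "\<And>\<sigma> y. \<sigma> \<in> {0..K} \<Longrightarrow> y \<in> \<Omega> \<Longrightarrow> \<bar>W \<sigma> y\<bar> \<le> M" using bW[of K] by blast
  have \<Omega>s: "\<Omega> \<in> sets borel" using \<Omega>o by auto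
  have cWs: "continuous_on \<Omega> (\<lambda>y. W \<sigma> y)" if "0 \<le> \<sigma>" for \<sigma>
  proof -
    have "continuous_on \<Omega> (\<lambda>y. (\<lambda>z. W (fst z) (snd z)) (\<sigma>, y))"
      by (rule continuous_on_compose2[OF cW]) (use that in \<open>auto intro!: continuous_intros\<close>)
    then show ?thesis by simp
  qed
  have meas: "(\<lambda>y. indicator \<Omega> y * W \<sigma> y) \<in> borel_measurable lebesgue" if "0 \<le> \<sigma>" for \<sigma>
  proof -
    have "(\<lambda>y. indicator \<Omega> y *\<^sub>R W \<sigma> y) \<in> borel_measurable borel"
      by (rule borel_measurable_continuous_on_indicator[OF \<Omega>s cWs[OF that]])
    then have "(\<lambda>y. indicator \<Omega> y * W \<sigma> y) \<in> borel_measurable lborel" by simp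
    then show ?thesis by (rule measurable_completion)
  qed
  have p1: "(\<lambda>y. indicator \<Omega> y * W a y) \<in> borel_measurable lebesgue" using meas a by auto
  have p2: "\<And>n. (\<lambda>y. indicator \<Omega> y * W (x n) y) \<in> borel_measurable lebesgue" using meas xs by auto
  have p3: "integrable lebesgue (\<lambda>y. M * indicator \<Omega> y)"
  proof -
    have "emeasure lebesgue \<Omega> < \<infinity>" using emeasure_bounded_finite[OF \<Omega>b] \<Omega>s by (simp add: emeasure_completion)
    then show ?thesis using integrable_real_indicator[of \<Omega> lebesgue] \<Omega>s by simp
  qed
  have p4: "AE y in lebesgue. (\<lambda>n. indicator \<Omega> y * W (x n) y) \<longlonglongrightarrow> indicator \<Omega> y * W a y"
  proof (intro AE_I2)
    fix y
    show "(\<lambda>n. indicator \<Omega> y * W (x n) y) \<longlonglongrightarrow> indicator \<Omega> y * W a y"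
    proof (cases "y \<in> \<Omega>")
      case True
      have "((\<lambda>z. W (fst z) (snd z)) \<circ> (\<lambda>n. (x n, y))) \<longlonglongrightarrow> (\<lambda>z. W (fst z) (snd z)) (a, y)"
      proof -
        have "(\<lambda>n. (x n, y)) \<longlonglongrightarrow> (a, y)" by (intro tendsto_Pair lim tendsto_const)
        moreover have "\<forall>n. (x n, y) \<in> {0..} \<times> \<Omega>" using xs True by auto
        moreover have "(a, y) \<in> {0..} \<times> \<Omega>" using a True by auto
        ultimately show ?thesis by (intro cW[unfolded continuous_on_sequentially, rule_format]) auto
      qed
      then show ?thesis using True by (simp add: comp_def)
    qed simp
  qed
  have p5: "\<And>n. AE y in lebesgue. norm (indicator \<Omega> y * W (x n) y) \<le> M * indicator \<Omega> y"
  proof (intro AE_I2)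
    fix n y
    show "norm (indicator \<Omega> y * W (x n) y) \<le> M * indicator \<Omega> y"
    proof (cases "y \<in> \<Omega>")
      case True
      have "x n \<in> {0..K}" using xs[of n] K[of n] by auto
      then show ?thesis using M True by simp
    qed simp
  qed
  have "(\<lambda>n. integral\<^sup>L lebesgue (\<lambda>y. indicator \<Omega> y * W (x n) y)) \<longlonglongrightarrow> integral\<^sup>L lebesgue (\<lambda>y. indicator \<Omega> y * W a y)"
    using Bochner_Integration.integral_dominated_convergence[OF p1 p2 p3 p4 p5] by simp
  then show "((\<lambda>\<sigma>. LINT y:\<Omega>|lebesgue. W \<sigma> y) \<circ> x) \<longlonglongrightarrow> (LINT y:\<Omega>|lebesgue. W a y)"
    by (simp add: sli_real comp_def)
qed

theorem mainTheorem9: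
  fixes \<Omega> :: "'d::euclidean_space set"
    and \<gamma> :: real
    and G :: "real \<Rightarrow> real \<Rightarrow> real"
    and DG :: "nat \<Rightarrow> nat \<Rightarrow> real \<Rightarrow> real \<Rightarrow> real"
    and I :: "'d \<Rightarrow> real"
    and n0 :: "real \<Rightarrow> 'd \<Rightarrow> real"
    and w0 :: "'d \<Rightarrow> 'd \<Rightarrow> real"
    and p :: "real \<Rightarrow> real \<Rightarrow> real"
    and pinf :: "real \<Rightarrow> real"
    and p_star p_inf s_star :: real
    and nk :: "real \<Rightarrow> real \<Rightarrow> real \<Rightarrow> 'd \<Rightarrow> real"
    and ninf :: "real \<Rightarrow> real \<Rightarrow> 'd \<Rightarrow> real"
  assumes dom: "bounded_domain \<Omega>"
    and gamma: "\<gamma> > 0"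
    and G_smooth: "smooth2 G DG"
    and G_bound: "\<exists>a b. a + b \<le> 1 \<and> (\<forall>x y. \<bar>G x y\<bar> \<le> a) \<and>
                     (\<forall>x y. sqrt ((DG 1 0 x y)\<^sup>2 + (DG 0 1 x y)\<^sup>2) \<le> b)"
    and I_cont: "continuous_on \<Omega> I" and I_bdd: "bounded (I ` \<Omega>)"
    and I_pos: "AE x in lebesgue. x \<in> \<Omega> \<longrightarrow> I x > 0"
    and n0_Cb: "Cb_L1 \<Omega> n0"
    and n0_nonneg: "\<forall>x\<in>\<Omega>. AE s in lborel. s > 0 \<longrightarrow> n0 s x \<ge> 0"
    and w0_cont: "continuous_on (\<Omega> \<times> \<Omega>) (\<lambda>z. w0 (fst z) (snd z))"
    and w0_bdd: "bounded ((\<lambda>z. w0 (fst z) (snd z)) ` (\<Omega> \<times> \<Omega>))"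
    and w0_nonneg: "\<forall>x\<in>\<Omega>. \<forall>y\<in>\<Omega>. w0 x y \<ge> 0"
    and g_mass: "(LINT x:\<Omega>|lebesgue. (LINT s:{0<..}|lborel. n0 s x)) = 1"
    and p_W1inf: "\<exists>L. \<forall>s1\<ge>0. \<forall>s2\<ge>0. \<forall>S1 S2.
                     \<bar>p s1 S1 - p s2 S2\<bar> \<le> L * dist (s1, S1) (s2, S2)"
    and consts_pos: "p_star > 0" "p_inf > 0" "s_star > 0"
    and p_bounds: "\<forall>s\<ge>0. \<forall>S. p_star * (if s > s_star then 1 else 0) \<le> p s S \<and> p s S \<le> p_inf"
    and p_limit: "\<forall>s\<ge>0. ((\<lambda>S. p s S) \<longlongrightarrow> pinf s) at_top"
    and nk_sol: "\<forall>k>0. nonlinear_solution p G \<gamma> I k \<Omega> n0 w0 (nk k)"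
    and ninf_sol: "linear_solution pinf \<Omega> n0 ninf"
  shows "\<forall>t>0. ((\<lambda>k. LINT z:({0<..} \<times> \<Omega>)|lebesgue.
                     \<bar>nk k t (fst z) (snd z) - ninf t (fst z) (snd z)\<bar>) \<longlongrightarrow> 0) at_top"
proof (intro allI impI)
  fix t :: real assume t: "t > 0"
  define Q where "Q k N w S \<longleftrightarrow>
        renewal_char (\<lambda>t s x. p s (S t x)) n0 \<Omega> (nk k) N \<and>
        continuous_on ({0..} \<times> \<Omega> \<times> \<Omega>) (\<lambda>z. w (fst z) (fst (snd z)) (snd (snd z))) \<and>
        (\<forall>T. bounded ((\<lambda>z. w (fst z) (fst (snd z)) (snd (snd z))) ` ({0..T} \<times> \<Omega> \<times> \<Omega>))) \<and>
        (\<forall>t\<ge>0. \<forall>x\<in>\<Omega>. S t x = (LINT y:\<Omega>|lebesgue. w t x y * N t y) + k * I x) \<and>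
        (\<forall>t\<ge>0. \<forall>x\<in>\<Omega>. \<forall>y\<in>\<Omega>.
           w t x y = exp (- t) * w0 x y
                     + \<gamma> * integral {0..t} (\<lambda>\<tau>. exp (- (t - \<tau>)) * G (N \<tau> x) (N \<tau> y)))"
    for k :: real and N :: "real \<Rightarrow> 'd \<Rightarrow> real" and w :: "real \<Rightarrow> 'd \<Rightarrow> 'd \<Rightarrow> real" and S :: "real \<Rightarrow> 'd \<Rightarrow> real"
  have ex: "\<exists>N w S. Q k N w S" if "0 < k" for k
    using nk_sol[rule_format, OF that] unfolding nonlinear_solution_def Q_def .
  have "\<forall>k. \<exists>NWS. 0 < k \<longrightarrow> Q k (fst NWS) (fst (snd NWS)) (snd (snd NWS))"
  proof
    fix k :: real
    show "\<exists>NWS. 0 < k \<longrightarrow> Q k (fst NWS) (fst (snd NWS)) (snd (snd NWS))"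
    proof (cases "0 < k")
      case True
      then obtain N w S where "Q k N w S" using ex by blast
      then show ?thesis by (intro exI[of _ "(N, w, S)"]) simp
    qed simp
  qed
  from choice[OF this] obtain F where F0: "\<forall>k. 0 < k \<longrightarrow> Q k (fst (F k)) (fst (snd (F k))) (snd (snd (F k)))"
    by blast
  have F: "\<And>k. 0 < k \<Longrightarrow> Q k (fst (F k)) (fst (snd (F k))) (snd (snd (F k)))" using F0 by blast
  define NN where "NN k = fst (F k)" for k
  define WW where "WW k = fst (snd (F k))" for k
  define SS where "SS k = snd (snd (F k))" for k
  have sol: "Q k (NN k) (WW k) (SS k)" if "0 < k" for k
    using F[OF that] by (simp add: NN_def WW_def SS_def)
  have rcK: "\<And>k. 0 < k \<Longrightarrow> renewal_char (\<lambda>t s x. p s (SS k t x)) n0 \<Omega> (nk k) (NN k)"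
    and cWW: "\<And>k. 0 < k \<Longrightarrow> continuous_on ({0..} \<times> \<Omega> \<times> \<Omega>) (\<lambda>z. WW k (fst z) (fst (snd z)) (snd (snd z)))"
    and Seq: "\<And>k \<sigma> x. 0 < k \<Longrightarrow> 0 \<le> \<sigma> \<Longrightarrow> x \<in> \<Omega> \<Longrightarrow> SS k \<sigma> x = (LINT y:\<Omega>|lebesgue. WW k \<sigma> x y * NN k \<sigma> y) + k * I x"
    and Weq: "\<And>k \<sigma> x y. 0 < k \<Longrightarrow> 0 \<le> \<sigma> \<Longrightarrow> x \<in> \<Omega> \<Longrightarrow> y \<in> \<Omega> \<Longrightarrow>
           WW k \<sigma> x y = exp (- \<sigma>) * w0 x y
                     + \<gamma> * integral {0..\<sigma>} (\<lambda>\<tau>. exp (- (\<sigma> - \<tau>)) * G (NN k \<tau> x) (NN k \<tau> y))"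
    using sol unfolding Q_def by auto
  obtain Ninf where rinf: "renewal_char (\<lambda>t s x. pinf s) n0 \<Omega> ninf Ninf"
    using ninf_sol unfolding linear_solution_def by blast
  obtain L where L: "\<forall>s1\<ge>0. \<forall>s2\<ge>0. \<forall>S1 S2. \<bar>p s1 S1 - p s2 S2\<bar> \<le> L * dist (s1, S1) (s2, S2)"
    using p_W1inf by blast
  have n0int: "\<And>x. x \<in> \<Omega> \<Longrightarrow> set_integrable lborel {0<..} (\<lambda>s. n0 s x)"
    using n0_Cb unfolding Cb_L1_def by blast
  obtain B where Bx: "\<And>x. x \<in> \<Omega> \<Longrightarrow> (LINT s:{0<..}|lborel. \<bar>n0 s x\<bar>) \<le> B"
    using n0_Cb unfolding Cb_L1_def by blast
  interpret pd: pdata p pinf p_inf L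
  proof
    show "\<And>s1 s2 S1 S2. 0 \<le> s1 \<Longrightarrow> 0 \<le> s2 \<Longrightarrow> \<bar>p s1 S1 - p s2 S2\<bar> \<le> L * dist (s1, S1) (s2, S2)"
      using L by blast
    show "\<And>s S. 0 \<le> s \<Longrightarrow> 0 \<le> p s S \<and> p s S \<le> p_inf"
    proof -
      fix s S :: real assume "0 \<le> s"
      then have "p_star * (if s > s_star then 1 else 0) \<le> p s S \<and> p s S \<le> p_inf" using p_bounds by blast
      moreover have "0 \<le> p_star * (if s > s_star then 1 else (0::real))" using consts_pos by simp
      ultimately show "0 \<le> p s S \<and> p s S \<le> p_inf" by linarith
    qed
    show "\<And>s. 0 \<le> s \<Longrightarrow> ((\<lambda>S. p s S) \<longlongrightarrow> pinf s) at_top" using p_limit by blast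
  qed
  have \<Omega>o: "open \<Omega>" and \<Omega>b: "bounded \<Omega>" and \<Omega>ne: "\<Omega> \<noteq> {}" using dom unfolding bounded_domain_def by auto
  have \<Omega>s: "\<Omega> \<in> sets borel" using \<Omega>o by auto
  have \<Omega>fin: "emeasure lborel \<Omega> < \<infinity>" by (rule emeasure_bounded_finite[OF \<Omega>b])
  have \<Omega>lfin: "emeasure lebesgue \<Omega> < \<infinity>" using \<Omega>fin \<Omega>s by (simp add: emeasure_completion)
  have \<Omega>ls: "\<Omega> \<in> sets lebesgue" using \<Omega>s by simp
  obtain x0 where x0: "x0 \<in> \<Omega>" using \<Omega>ne by blast
  have B0: "0 \<le> B"
  proof -
    have "0 \<le> (LINT s:{0<..}|lborel. \<bar>n0 s x0\<bar>)" unfolding sli_real by (intro integral_nonneg_AE AE_I2) simp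
    then show ?thesis using Bx[OF x0] by linarith
  qed
  have P0: "0 \<le> p_inf" using consts_pos by simp
  define C where "C T = p_inf * B * exp (p_inf * T)" for T
  have C0: "0 \<le> C T" for T unfolding C_def using P0 B0 by simp
  have Cmono: "C \<sigma> \<le> C T" if "\<sigma> \<le> T" for \<sigma> T
    unfolding C_def using that P0 B0 by (intro mult_left_mono) (auto intro: mult_left_mono)
  have RDk: "renewal_data (\<lambda>\<tau> s. p s (SS k \<tau> x)) (\<lambda>\<tau> s. nk k \<tau> s x) (\<lambda>\<tau>. NN k \<tau> x) (\<lambda>s. n0 s x) p_inf B"
    if "0 < k" "x \<in> \<Omega>" for k x
  proof -
    have abd: "\<And>\<tau> s. 0 \<le> \<tau> \<Longrightarrow> 0 \<le> s \<Longrightarrow> 0 \<le> p s (SS k \<tau> x) \<and> p s (SS k \<tau> x) \<le> p_inf"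
      using pd.pb by blast
    show ?thesis by (rule RC_to_RD[OF rcK[OF that(1)] that(2) abd n0int[OF that(2)] Bx[OF that(2)]])
  qed
  have RDi: "renewal_data (\<lambda>\<tau> s. pinf s) (\<lambda>\<tau> s. ninf \<tau> s x) (\<lambda>\<tau>. Ninf \<tau> x) (\<lambda>s. n0 s x) p_inf B"
    if "x \<in> \<Omega>" for x
  proof -
    have abd: "\<And>\<tau> s. 0 \<le> \<tau> \<Longrightarrow> 0 \<le> s \<Longrightarrow> 0 \<le> pinf s \<and> pinf s \<le> p_inf"
      using pd.pinf_bd by blast
    show ?thesis by (rule RC_to_RD[OF rinf that abd n0int[OF that] Bx[OF that]])
  qed
  have Nbd: "\<bar>NN k \<sigma> y\<bar> \<le> C T" if "0 < k" "y \<in> \<Omega>" "0 \<le> \<sigma>" "\<sigma> \<le> T" for k \<sigma> y T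
  proof -
    have "\<bar>NN k \<sigma> y\<bar> \<le> C \<sigma>" unfolding C_def by (rule renewal_data.N_bound[OF RDk[OF that(1,2)] that(3)])
    also have "\<dots> \<le> C T" using Cmono that(4) .
    finally show ?thesis .
  qed
  have Gb: "\<bar>G a b\<bar> \<le> 1" for a b
  proof -
    obtain a1 b1 where ab: "a1 + b1 \<le> 1" "\<forall>x y. \<bar>G x y\<bar> \<le> a1" "\<forall>x y. sqrt ((DG 1 0 x y)\<^sup>2 + (DG 0 1 x y)\<^sup>2) \<le> b1"
      using G_bound by blast
    have s1: "sqrt ((DG 1 0 0 0)\<^sup>2 + (DG 0 1 0 0)\<^sup>2) \<le> b1" using ab(3) by blast
    have "0 \<le> sqrt ((DG 1 0 0 0)\<^sup>2 + (DG 0 1 0 0)\<^sup>2)" by simp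
    then have "0 \<le> b1" using s1 by linarith
    moreover have "\<bar>G a b\<bar> \<le> a1" using ab(2) by blast
    ultimately show ?thesis using ab(1) by linarith
  qed
  obtain W0 where W0a: "\<forall>z\<in>(\<lambda>z. w0 (fst z) (snd z)) ` (\<Omega> \<times> \<Omega>). norm z \<le> W0"
    using w0_bdd unfolding bounded_iff by blast
  have W0: "\<bar>w0 x y\<bar> \<le> W0" if "x \<in> \<Omega>" "y \<in> \<Omega>" for x y
  proof -
    have "w0 x y \<in> (\<lambda>z. w0 (fst z) (snd z)) ` (\<Omega> \<times> \<Omega>)"
      using that by (intro rev_image_eqI[of "(x, y)"]) auto
    then show ?thesis using W0a by auto
  qed
  have W00: "0 \<le> W0" using W0[OF x0 x0] by linarith
  have Wbd: "\<bar>WW k \<sigma> x y\<bar> \<le> W0 + \<gamma> * T" if "0 < k" "0 \<le> \<sigma>" "\<sigma> \<le> T" "x \<in> \<Omega>" "y \<in> \<Omega>" for k \<sigma> x y T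
  proof -
    have "\<bar>exp (- \<sigma>) * w0 x y\<bar> \<le> 1 * W0"
      unfolding abs_mult using that W0[OF that(4,5)] W00 by (intro mult_mono) auto
    moreover have "\<bar>integral {0..\<sigma>} (\<lambda>\<tau>. exp (- (\<sigma> - \<tau>)) * G (NN k \<tau> x) (NN k \<tau> y))\<bar> \<le> 1 * \<sigma>"
    proof (rule integral_bound_any[OF that(2)])
      fix u assume "u \<in> {0..\<sigma>}"
      then have "\<bar>exp (- (\<sigma> - u))\<bar> \<le> 1" by simp
      then show "\<bar>exp (- (\<sigma> - u)) * G (NN k u x) (NN k u y)\<bar> \<le> 1"
        unfolding abs_mult using Gb by (metis abs_ge_zero mult_le_one)
    qed
    moreover have "\<bar>\<gamma> * integral {0..\<sigma>} (\<lambda>\<tau>. exp (- (\<sigma> - \<tau>)) * G (NN k \<tau> x) (NN k \<tau> y))\<bar>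
        = \<gamma> * \<bar>integral {0..\<sigma>} (\<lambda>\<tau>. exp (- (\<sigma> - \<tau>)) * G (NN k \<tau> x) (NN k \<tau> y))\<bar>"
      using gamma by (simp add: abs_mult)
    moreover have "\<gamma> * \<bar>integral {0..\<sigma>} (\<lambda>\<tau>. exp (- (\<sigma> - \<tau>)) * G (NN k \<tau> x) (NN k \<tau> y))\<bar> \<le> \<gamma> * (1 * \<sigma>)"
      using gamma calculation(2) by (intro mult_left_mono) auto
    moreover have "\<gamma> * \<sigma> \<le> \<gamma> * T" using gamma that by simp
    moreover have "\<bar>WW k \<sigma> x y\<bar> \<le> \<bar>exp (- \<sigma>) * w0 x y\<bar> + \<bar>\<gamma> * integral {0..\<sigma>} (\<lambda>\<tau>. exp (- (\<sigma> - \<tau>)) * G (NN k \<tau> x) (NN k \<tau> y))\<bar>"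
      unfolding Weq[OF that(1,2,4,5)] by (rule abs_triangle_ineq)
    ultimately show ?thesis by linarith
  qed
  define K where "K T = (W0 + \<gamma> * T) * C T * measure lebesgue \<Omega>" for T
  have Sbd: "k * I x - K \<sigma> \<le> SS k \<sigma> x" if "0 < k" "0 \<le> \<sigma>" "x \<in> \<Omega>" for k \<sigma> x
  proof -
    have "\<bar>LINT y:\<Omega>|lebesgue. WW k \<sigma> x y * NN k \<sigma> y\<bar> \<le> ((W0 + \<gamma> * \<sigma>) * C \<sigma>) * measure lebesgue \<Omega>"
    proof (rule set_integral_bound_lebesgue[OF \<Omega>ls \<Omega>lfin])
      fix y assume y: "y \<in> \<Omega>"
      show "\<bar>WW k \<sigma> x y * NN k \<sigma> y\<bar> \<le> (W0 + \<gamma> * \<sigma>) * C \<sigma>"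
        unfolding abs_mult using Wbd[OF that(1,2) order_refl that(3) y] Nbd[OF that(1) y that(2) order_refl]
        by (intro mult_mono) auto
    next
      show "0 \<le> (W0 + \<gamma> * \<sigma>) * C \<sigma>" using W00 gamma that C0 by simp
    qed
    then show ?thesis using Seq[OF that] unfolding K_def by linarith
  qed
  have cNN: "continuous_on ({0..} \<times> \<Omega>) (\<lambda>z. NN k (fst z) (snd z))" if "0 < k" for k
    using rcK[OF that] unfolding renewal_char_def by blast
  have Scont: "continuous_on {0..} (\<lambda>\<sigma>. SS k \<sigma> x)" if k: "0 < k" and x: "x \<in> \<Omega>" for k x
  proof -
    have c1: "continuous_on ({0..} \<times> \<Omega>) (\<lambda>z. WW k (fst z) x (snd z) * NN k (fst z) (snd z))"
    proof (intro continuous_intros)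
      show "continuous_on ({0..} \<times> \<Omega>) (\<lambda>z. NN k (fst z) (snd z))" by (rule cNN[OF k])
      have "continuous_on ({0..} \<times> \<Omega>) (\<lambda>z. (\<lambda>z. WW k (fst z) (fst (snd z)) (snd (snd z))) (fst z, x, snd z))"
        by (rule continuous_on_compose2[OF cWW[OF k]]) (use x in \<open>auto intro!: continuous_intros\<close>)
      then show "continuous_on ({0..} \<times> \<Omega>) (\<lambda>z. WW k (fst z) x (snd z))" by simp
    qed
    have b1: "\<exists>M. \<forall>\<sigma>\<in>{0..T}. \<forall>y\<in>\<Omega>. \<bar>WW k \<sigma> x y * NN k \<sigma> y\<bar> \<le> M" for T
    proof (intro exI ballI)
      fix \<sigma> y assume \<sigma>: "\<sigma> \<in> {0..T}" and y: "y \<in> \<Omega>"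
      show "\<bar>WW k \<sigma> x y * NN k \<sigma> y\<bar> \<le> (W0 + \<gamma> * T) * C T"
        unfolding abs_mult using \<sigma> Wbd[OF k _ _ x y, of \<sigma> T] Nbd[OF k y, of \<sigma> T]
        by (intro mult_mono) auto
    qed
    have "continuous_on {0..} (\<lambda>\<sigma>. (LINT y:\<Omega>|lebesgue. WW k \<sigma> x y * NN k \<sigma> y) + k * I x)"
      by (intro continuous_intros param_cont[OF \<Omega>o \<Omega>b c1[simplified] b1])
    then show ?thesis
      by (rule continuous_on_cong[THEN iffD1, rotated 2]) (use Seq[OF k _ x] in auto)
  qed
  have pxconv: "(\<lambda>m. LINT s:{0<..}|lborel. \<bar>nk (Y m) t s x - ninf t s x\<bar>) \<longlonglongrightarrow> 0"
    if Y: "\<And>m. 0 < Y m" "filterlim Y at_top sequentially" and x: "x \<in> \<Omega>" "0 < I x" for Y x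
  proof -
    interpret cd: conv_data p pinf p_inf L "\<lambda>m \<sigma>. SS (Y m) \<sigma> x" "\<lambda>m \<tau> s. nk (Y m) \<tau> s x"
      "\<lambda>m \<tau>. NN (Y m) \<tau> x" "\<lambda>\<tau> s. ninf \<tau> s x" "\<lambda>\<tau>. Ninf \<tau> x" "\<lambda>s. n0 s x" B
    proof (rule conv_data.intro[OF pd.pdata_axioms], rule conv_data_axioms.intro)
      show "\<And>k. renewal_data (\<lambda>\<tau> s. p s (SS (Y k) \<tau> x)) (\<lambda>\<tau> s. nk (Y k) \<tau> s x) (\<lambda>\<tau>. NN (Y k) \<tau> x) (\<lambda>s. n0 s x) p_inf B"
        by (rule RDk[OF Y(1) x(1)])
      show "renewal_data (\<lambda>\<tau> s. pinf s) (\<lambda>\<tau> s. ninf \<tau> s x) (\<lambda>\<tau>. Ninf \<tau> x) (\<lambda>s. n0 s x) p_inf B"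
        by (rule RDi[OF x(1)])
      show "\<And>k. continuous_on {0..} (\<lambda>\<sigma>. SS (Y k) \<sigma> x)" by (rule Scont[OF Y(1) x(1)])
      fix \<sigma> :: real assume \<sigma>: "0 \<le> \<sigma>"
      have "filterlim (\<lambda>m. I x * Y m) at_top sequentially"
        by (rule filterlim_tendsto_pos_mult_at_top[OF tendsto_const x(2) Y(2)])
      then have "filterlim (\<lambda>m. - K \<sigma> + I x * Y m) at_top sequentially"
        by (rule filterlim_tendsto_add_at_top[OF tendsto_const])
      moreover have "\<forall>m. - K \<sigma> + I x * Y m \<le> SS (Y m) \<sigma> x"
        using Sbd[OF Y(1) \<sigma> x(1)] by (simp add: mult.commute)
      ultimately show "filterlim (\<lambda>m. SS (Y m) \<sigma> x) at_top sequentially"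
        using filterlim_at_top_mono[of "\<lambda>m. - K \<sigma> + I x * Y m" sequentially "\<lambda>m. SS (Y m) \<sigma> x"]
        by (simp add: always_eventually)
    qed
    show ?thesis using cd.n_conv[of t] t by simp
  qed
  define KK where "KK = 2 * (B + t * (p_inf * B * exp (p_inf * t)))"
  have bndx: "(LINT s:{0<..}|lborel. \<bar>nk k t s x - ninf t s x\<bar>) \<le> KK" if k: "0 < k" and x: "x \<in> \<Omega>" for k x
  proof -
    have i1: "integrable lborel (\<lambda>s. indicator {0<..} s * \<bar>nk k t s x\<bar>)"
      using integrable_abs[OF renewal_data.nint[OF RDk[OF k x], of t, unfolded si_real]] t by (simp add: abs_mult)
    have i2: "integrable lborel (\<lambda>s. indicator {0<..} s * \<bar>ninf t s x\<bar>)"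
      using integrable_abs[OF renewal_data.nint[OF RDi[OF x], of t, unfolded si_real]] t by (simp add: abs_mult)
    have "(LINT s:{0<..}|lborel. \<bar>nk k t s x - ninf t s x\<bar>) \<le>
        integral\<^sup>L lborel (\<lambda>s. indicator {0<..} s * \<bar>nk k t s x\<bar> + indicator {0<..} s * \<bar>ninf t s x\<bar>)"
      unfolding sli_real
      by (rule integral_mono'[OF Bochner_Integration.integrable_add[OF i1 i2]])
         (auto simp: indicator_def abs_triangle_ineq4)
    also have "\<dots> = (LINT s:{0<..}|lborel. \<bar>nk k t s x\<bar>) + (LINT s:{0<..}|lborel. \<bar>ninf t s x\<bar>)"
      unfolding sli_real by (rule Bochner_Integration.integral_add[OF i1 i2])
    also have "\<dots> \<le> (B + t * (p_inf * B * exp (p_inf * t))) + (B + t * (p_inf * B * exp (p_inf * t)))"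
      using t by (intro add_mono renewal_data.n_L1_bound[OF RDk[OF k x]] renewal_data.n_L1_bound[OF RDi[OF x]]) auto
    finally show ?thesis unfolding KK_def by (simp add: algebra_simps)
  qed
  show "((\<lambda>k. LINT z:({0<..} \<times> \<Omega>)|lebesgue. \<bar>nk k t (fst z) (snd z) - ninf t (fst z) (snd z)\<bar>) \<longlongrightarrow> 0) at_top"
  proof (rule tendsto_at_topI_sequentially)
    fix X :: "nat \<Rightarrow> real" assume X: "filterlim X at_top sequentially"
    define Y where "Y m = max 1 (X m)" for m
    have Y0: "0 < Y m" for m by (simp add: Y_def)
    have evXY: "eventually (\<lambda>m. X m = Y m) sequentially"
      using filterlim_at_top[THEN iffD1, OF X, rule_format, of 1] by eventually_elim (simp add: Y_def)
    have Ylim: "filterlim Y at_top sequentially"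
      by (rule filterlim_at_top_mono[OF X]) (simp add: Y_def always_eventually)
    have int_u: "integrable (lebesgue_on ({0<..} \<times> \<Omega>)) (\<lambda>z. nk (Y m) t (fst z) (snd z))" for m
      using rcK[OF Y0[of m]] t unfolding renewal_char_def by auto
    have int_v: "integrable (lebesgue_on ({0<..} \<times> \<Omega>)) (\<lambda>z. ninf t (fst z) (snd z))"
      using rinf t unfolding renewal_char_def by auto
    have su: "set_integrable lborel {0<..} (\<lambda>s. nk (Y m) t s x)" if "x \<in> \<Omega>" for m x
      using rcK[OF Y0[of m]] t that unfolding renewal_char_def by auto
    have sv: "set_integrable lborel {0<..} (\<lambda>s. ninf t s x)" if "x \<in> \<Omega>" for x
      using rinf t that unfolding renewal_char_def by auto
    have conv: "AE x in lborel. x \<in> \<Omega> \<longrightarrow> (\<lambda>m. LINT s:{0<..}|lborel. \<bar>nk (Y m) t s x - ninf t s x\<bar>) \<longlonglongrightarrow> 0"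
      using I_pos[unfolded AE_completion_iff]
    proof eventually_elim
      case (elim x)
      then show ?case using pxconv[OF Y0 Ylim] by blast
    qed
    have "(\<lambda>m. LINT z:({0<..} \<times> \<Omega>)|lebesgue. \<bar>nk (Y m) t (fst z) (snd z) - ninf t (fst z) (snd z)\<bar>) \<longlonglongrightarrow> 0"
      by (rule outer_conv[OF \<Omega>s \<Omega>fin int_u int_v su sv conv bndx[OF Y0]])
    then show "(\<lambda>m. LINT z:({0<..} \<times> \<Omega>)|lebesgue. \<bar>nk (X m) t (fst z) (snd z) - ninf t (fst z) (snd z)\<bar>) \<longlonglongrightarrow> 0"
      by (rule tendsto_cong[THEN iffD2, rotated]) (use evXY in \<open>auto elim: eventually_mono\<close>)
  qed
qed

end
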